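(* Let $(R,\mathfrak m)$ be a one-dimensional Cohen–Macaulay local ring with a canonical fractional ideal $K$. Let $T$ be a ring with $R\subseteq T\subseteq\overline R$ which is a finitely generated $R$-module, such that $K\subseteq T$ and $R\neq T$, and let $I=R:T$. Then $T/K\cong\mathrm K_{R/I}$; hence $\ell_R(T/K)=\ell_R(R/I)$.
   Context: $\overline R$ is the integral closure of $R$ in its total ring of fractions $\mathrm Q(R)$. A canonical fractional ideal is an $R$-submodule $K\subseteq\mathrm Q(R)$ with $R\subseteq K\subseteq\overline R$ and $K\cong\mathrm K_R$. $R:T=\{x\in R:xT\subseteq R\}$. $\mathrm K_{R/I}$ denotes the canonical module of $R/I$. *)

theory Defs
  imports Main "HOL-Library.Extended_Nat"
begin

text \<open>The ambient type 'q (a commutative ring) plays the role of the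
total ring of fractions Q(R); the ring R, ideals, fractional ideals and all modules
considered are subsets of 'q. Module quotients M/N are represented by pairs N \<subseteq> M of
R-submodules of 'q.\<close>

definition subring :: "'q::comm_ring_1 set \<Rightarrow> bool" where
  "subring R \<longleftrightarrow> 0 \<in> R \<and> 1 \<in> R \<and> (\<forall>x\<in>R. \<forall>y\<in>R. x + y \<in> R \<and> x * y \<in> R \<and> - x \<in> R)"

definition nzd :: "'q::comm_ring_1 set \<Rightarrow> 'q \<Rightarrow> bool" where
  "nzd R a \<longleftrightarrow> a \<in> R \<and> (\<forall>b\<in>R. a * b = 0 \<longrightarrow> b = 0)"

definition total_ring_of_fractions :: "'q::comm_ring_1 set \<Rightarrow> bool" where
  "total_ring_of_fractions R \<longleftrightarrow> subring R \<and>
     (\<forall>s. nzd R s \<longrightarrow> (\<exists>u. s * u = 1)) \<and>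
     (\<forall>q. \<exists>a s. a \<in> R \<and> nzd R s \<and> q * s = a)"

definition submodule :: "'q::comm_ring_1 set \<Rightarrow> 'q set \<Rightarrow> bool" where
  "submodule R M \<longleftrightarrow> 0 \<in> M \<and> (\<forall>x\<in>M. \<forall>y\<in>M. x + y \<in> M) \<and> (\<forall>r\<in>R. \<forall>x\<in>M. r * x \<in> M)"

definition rspan :: "'q::comm_ring_1 set \<Rightarrow> 'q set \<Rightarrow> 'q set" where
  "rspan R F = {\<Sum>f\<in>F. c f * f | c. \<forall>f\<in>F. c f \<in> R}"

definition fin_gen :: "'q::comm_ring_1 set \<Rightarrow> 'q set \<Rightarrow> bool" where
  "fin_gen R M \<longleftrightarrow> (\<exists>F. finite F \<and> F \<subseteq> M \<and> M = rspan R F)"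

definition ideal :: "'q::comm_ring_1 set \<Rightarrow> 'q set \<Rightarrow> bool" where
  "ideal R J \<longleftrightarrow> J \<subseteq> R \<and> submodule R J"

definition prime_ideal :: "'q::comm_ring_1 set \<Rightarrow> 'q set \<Rightarrow> bool" where
  "prime_ideal R P \<longleftrightarrow> ideal R P \<and> P \<noteq> R \<and> (\<forall>a\<in>R. \<forall>b\<in>R. a * b \<in> P \<longrightarrow> a \<in> P \<or> b \<in> P)"

definition maximal_ideal :: "'q::comm_ring_1 set \<Rightarrow> 'q set \<Rightarrow> bool" where
  "maximal_ideal R m \<longleftrightarrow> ideal R m \<and> m \<noteq> R \<and> (\<forall>J. ideal R J \<and> m \<subseteq> J \<longrightarrow> J = m \<or> J = R)"

definition noetherian_ring :: "'q::comm_ring_1 set \<Rightarrow> bool" where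
  "noetherian_ring R \<longleftrightarrow> subring R \<and> (\<forall>J. ideal R J \<longrightarrow> fin_gen R J)"

definition local_ring :: "'q::comm_ring_1 set \<Rightarrow> 'q set \<Rightarrow> bool" where
  "local_ring R m \<longleftrightarrow> noetherian_ring R \<and> maximal_ideal R m \<and> (\<forall>J. maximal_ideal R J \<longrightarrow> J = m)"

definition krull_dim :: "'q::comm_ring_1 set \<Rightarrow> enat" where
  "krull_dim R = Sup {enat n | n. \<exists>P :: nat \<Rightarrow> 'q set.
      (\<forall>i\<le>n. prime_ideal R (P i)) \<and> (\<forall>i<n. P i \<subset> P (Suc i))}"

definition depth :: "'q::comm_ring_1 set \<Rightarrow> 'q set \<Rightarrow> enat" where
  "depth R m = Sup {enat n | n. \<exists>x :: nat \<Rightarrow> 'q. (\<forall>i<n. x i \<in> m) \<and>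
      (\<forall>i<n. \<forall>a\<in>R. x i * a \<in> rspan R (x ` {..<i}) \<longrightarrow> a \<in> rspan R (x ` {..<i}))}"

definition cohen_macaulay_local :: "'q::comm_ring_1 set \<Rightarrow> 'q set \<Rightarrow> bool" where
  "cohen_macaulay_local R m \<longleftrightarrow> local_ring R m \<and> depth R m = krull_dim R"

definition mlength :: "'q::comm_ring_1 set \<Rightarrow> 'q set \<Rightarrow> 'q set \<Rightarrow> enat" where
  "mlength R N M = Sup {enat n | n. \<exists>L :: nat \<Rightarrow> 'q set. L 0 = N \<and> L n = M \<and>
      (\<forall>i\<le>n. submodule R (L i)) \<and> (\<forall>i<n. L i \<subset> L (Suc i))}"

text \<open>M/N is an injective module over R/A (Baer's criterion: every R/A-linear map from an
ideal J/A of R/A to M/N extends to R/A).\<close>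
definition injective_over_quot :: "'q::comm_ring_1 set \<Rightarrow> 'q set \<Rightarrow> 'q set \<Rightarrow> 'q set \<Rightarrow> bool" where
  "injective_over_quot R A N M \<longleftrightarrow>
     (\<forall>J f. ideal R J \<and> A \<subseteq> J \<and> f ` J \<subseteq> M \<and>
        (\<forall>a\<in>J. \<forall>b\<in>J. f (a + b) - (f a + f b) \<in> N) \<and>
        (\<forall>r\<in>R. \<forall>a\<in>J. f (r * a) - r * f a \<in> N) \<and>
        (\<forall>a\<in>A. f a \<in> N)
      \<longrightarrow> (\<exists>y\<in>M. \<forall>a\<in>J. f a - a * y \<in> N))"

text \<open>M/N is an R/A-module (A M \<subseteq> N) which is an injective hull over R/A of the residue
field (for a local ring the simple module S/N is the residue field). For the Artinian
local ring R/A this is the canonical module K_{R/A} = E_{R/A}(k).\<close>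
definition inj_hull_residue :: "'q::comm_ring_1 set \<Rightarrow> 'q set \<Rightarrow> 'q set \<Rightarrow> 'q set \<Rightarrow> bool" where
  "inj_hull_residue R A N M \<longleftrightarrow> submodule R N \<and> submodule R M \<and> N \<subseteq> M \<and>
     (\<forall>a\<in>A. \<forall>x\<in>M. a * x \<in> N) \<and>
     injective_over_quot R A N M \<and>
     (\<exists>S. submodule R S \<and> N \<subseteq> S \<and> S \<subseteq> M \<and> mlength R N S = 1 \<and>
        (\<forall>L. submodule R L \<and> N \<subset> L \<and> L \<subseteq> M \<longrightarrow> N \<subset> L \<inter> S))"

text \<open>K is a canonical module of the one-dimensional Cohen-Macaulay local ring (R,m):
K is finitely generated, and for an element x \<in> m regular on R and on K, K/xK is
the canonical module of R/xR (Bruns-Herzog 3.3.5).\<close>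
definition canonical_module_dim1 :: "'q::comm_ring_1 set \<Rightarrow> 'q set \<Rightarrow> 'q set \<Rightarrow> bool" where
  "canonical_module_dim1 R m K \<longleftrightarrow> submodule R K \<and> fin_gen R K \<and>
     (\<exists>x\<in>m. nzd R x \<and> (\<forall>k\<in>K. x * k = 0 \<longrightarrow> k = 0) \<and>
        inj_hull_residue R ((\<lambda>r. x * r) ` R) ((\<lambda>k. x * k) ` K) K)"

definition integral_closure :: "'q::comm_ring_1 set \<Rightarrow> 'q set" where
  "integral_closure R = {q. \<exists>n c. (\<forall>i<n. c i \<in> R) \<and> q ^ n + (\<Sum>i<n. c i * q ^ i) = 0}"

definition colon :: "'q::comm_ring_1 set \<Rightarrow> 'q set \<Rightarrow> 'q set" where
  "colon R T = {x \<in> R. \<forall>t\<in>T. x * t \<in> R}"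

end

theory Submission
  imports Defs
begin

lemma subring_facts:
  assumes "subring R"
  shows "0 \<in> R" "1 \<in> R" "a \<in> R \<Longrightarrow> b \<in> R \<Longrightarrow> a + b \<in> R"
    "a \<in> R \<Longrightarrow> b \<in> R \<Longrightarrow> a * b \<in> R" "a \<in> R \<Longrightarrow> - a \<in> R"
    "a \<in> R \<Longrightarrow> b \<in> R \<Longrightarrow> a - b \<in> R" "a \<in> R \<Longrightarrow> a ^ k \<in> R"
proof -
  show "0 \<in> R" "1 \<in> R" using assms unfolding subring_def by auto
  show "a \<in> R \<Longrightarrow> b \<in> R \<Longrightarrow> a + b \<in> R" "a \<in> R \<Longrightarrow> b \<in> R \<Longrightarrow> a * b \<in> R"
    "a \<in> R \<Longrightarrow> - a \<in> R" using assms unfolding subring_def by auto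
  show "a \<in> R \<Longrightarrow> b \<in> R \<Longrightarrow> a - b \<in> R" using assms unfolding subring_def
    by (metis diff_conv_add_uminus)
  show "a \<in> R \<Longrightarrow> a ^ k \<in> R"
    by (induction k) (use assms in \<open>auto simp: subring_def\<close>)
qed

lemma submod_facts:
  assumes "subring R" "submodule R M"
  shows "0 \<in> M" "a \<in> M \<Longrightarrow> b \<in> M \<Longrightarrow> a + b \<in> M" "r \<in> R \<Longrightarrow> a \<in> M \<Longrightarrow> r * a \<in> M"
    "a \<in> M \<Longrightarrow> - a \<in> M" "a \<in> M \<Longrightarrow> b \<in> M \<Longrightarrow> a - b \<in> M"
proof -
  show "0 \<in> M" "a \<in> M \<Longrightarrow> b \<in> M \<Longrightarrow> a + b \<in> M" "r \<in> R \<Longrightarrow> a \<in> M \<Longrightarrow> r * a \<in> M"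
    using assms(2) unfolding submodule_def by auto
  have m1: "-1 \<in> R" using subring_facts[OF assms(1)] by auto
  show na: "a \<in> M \<Longrightarrow> - a \<in> M" using assms(2) m1 unfolding submodule_def
    by (metis mult_minus1)
  show "a \<in> M \<Longrightarrow> b \<in> M \<Longrightarrow> a - b \<in> M"
  proof -
    assume "a \<in> M" "b \<in> M"
    moreover have "a - b = a + (-1) * b" by simp
    ultimately show "a - b \<in> M" using assms(2) m1 unfolding submodule_def by metis
  qed
qed

lemma zorn_ideal:
  assumes "ideal R J0" "J0 \<inter> M = {}"
  shows "\<exists>P. ideal R P \<and> J0 \<subseteq> P \<and> P \<inter> M = {} \<and>
           (\<forall>Q. ideal R Q \<and> P \<subseteq> Q \<and> Q \<inter> M = {} \<longrightarrow> Q = P)"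
proof -
  define A where "A = {J. ideal R J \<and> J0 \<subseteq> J \<and> J \<inter> M = {}}"
  have "\<forall>C\<in>chains A. \<exists>U\<in>A. \<forall>X\<in>C. X \<subseteq> U"
  proof
    fix C assume C: "C \<in> chains A"
    show "\<exists>U\<in>A. \<forall>X\<in>C. X \<subseteq> U"
    proof (cases "C = {}")
      case True then show ?thesis using assms unfolding A_def by auto
    next
      case False
      then obtain X0 where X0: "X0 \<in> C" by auto
      have CA: "C \<subseteq> A" using chainsD2[OF C] .
      have "\<Union>C \<in> A"
        unfolding A_def ideal_def submodule_def
      proof (intro CollectI conjI ballI)
        show "\<Union>C \<subseteq> R" using CA unfolding A_def ideal_def by auto
        show "0 \<in> \<Union>C" using CA X0 unfolding A_def ideal_def submodule_def by auto
        show "J0 \<subseteq> \<Union>C" using CA X0 unfolding A_def by auto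
        show "\<Union>C \<inter> M = {}" using CA unfolding A_def by auto
      next
        fix a b assume a: "a \<in> \<Union>C" and b: "b \<in> \<Union>C"
        then obtain Xa Xb where "Xa \<in> C" "Xb \<in> C" "a \<in> Xa" "b \<in> Xb" by auto
        then obtain X where "X \<in> C" "a \<in> X" "b \<in> X" using chainsD[OF C] by blast
        then show "a + b \<in> \<Union>C" using CA unfolding A_def ideal_def submodule_def by blast
      next
        fix r a assume "r \<in> R" "a \<in> \<Union>C"
        then show "r * a \<in> \<Union>C" using CA unfolding A_def ideal_def submodule_def by blast
      qed
      then show ?thesis by blast
    qed
  qed
  from Zorn_Lemma2[OF this] obtain P where "P \<in> A" "\<forall>X\<in>A. P \<subseteq> X \<longrightarrow> X = P" by blast
  then have "ideal R P" "J0 \<subseteq> P" "P \<inter> M = {}"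
    "\<forall>Q. ideal R Q \<and> P \<subseteq> Q \<and> Q \<inter> M = {} \<longrightarrow> Q = P"
    unfolding A_def by auto
  then show ?thesis by blast
qed

lemma ideal_one:
  assumes "ideal R J" "1 \<in> J" shows "J = R"
  using assms unfolding ideal_def submodule_def by (metis mult.right_neutral subsetI subset_antisym)

lemma idealD:
  assumes "ideal R J"
  shows "J \<subseteq> R" "0 \<in> J" "a \<in> J \<Longrightarrow> b \<in> J \<Longrightarrow> a + b \<in> J"
    "r \<in> R \<Longrightarrow> a \<in> J \<Longrightarrow> r * a \<in> J" "r \<in> R \<Longrightarrow> a \<in> J \<Longrightarrow> a * r \<in> J"
  using assms unfolding ideal_def submodule_def by (auto simp: mult.commute)

lemma zorn_prime:
  assumes S: "subring R" and "ideal R J0" "J0 \<inter> M = {}" "1 \<in> M" "M \<subseteq> R"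
    and Mm: "\<And>a b. a\<in>M \<Longrightarrow> b\<in>M \<Longrightarrow> a * b \<in> M"
  shows "\<exists>P. prime_ideal R P \<and> J0 \<subseteq> P \<and> P \<inter> M = {}"
proof -
  obtain P where P: "ideal R P" "J0 \<subseteq> P" "P \<inter> M = {}"
    and mx: "\<forall>Q. ideal R Q \<and> P \<subseteq> Q \<and> Q \<inter> M = {} \<longrightarrow> Q = P"
    using zorn_ideal[OF assms(2,3)] by blast
  note PI = idealD[OF P(1)]
  note SR = subring_facts[OF S]
  have ext: "\<exists>p r. p \<in> P \<and> r \<in> R \<and> p + a * r \<in> M" if a: "a \<in> R" "a \<notin> P" for a
  proof (rule ccontr)
    assume H: "\<not> ?thesis"
    define Q where "Q = {p + a * r | p r. p \<in> P \<and> r \<in> R}"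
    have "ideal R Q" unfolding ideal_def submodule_def
    proof (intro conjI ballI)
      show "Q \<subseteq> R"
      proof
        fix y assume "y \<in> Q"
        then obtain p r where "y = p + a * r" "p \<in> P" "r \<in> R" unfolding Q_def by blast
        then show "y \<in> R" using PI(1) SR(3,4) a(1) by blast
      qed
      have "0 = 0 + a * 0" by simp
      then show "0 \<in> Q" unfolding Q_def using PI(2) SR(1) by blast
    next
      fix y z assume "y \<in> Q" "z \<in> Q"
      then obtain p r p' r' where "y = p + a * r" "z = p' + a * r'" "p \<in> P" "r \<in> R" "p' \<in> P" "r' \<in> R"
        unfolding Q_def by blast
      moreover have "y + z = (p + p') + a * (r + r')" using calculation by (simp add: algebra_simps)
      moreover have "p + p' \<in> P" "r + r' \<in> R" using calculation PI(3) SR(3) by blast+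
      ultimately show "y + z \<in> Q" unfolding Q_def by blast
    next
      fix c y assume c: "c \<in> R" "y \<in> Q"
      then obtain p r where "y = p + a * r" "p \<in> P" "r \<in> R" unfolding Q_def by blast
      moreover have "c * y = c * p + a * (c * r)" using calculation by (simp add: algebra_simps)
      moreover have "c * p \<in> P" "c * r \<in> R" using calculation c PI(4) SR(4) by blast+
      ultimately show "c * y \<in> Q" unfolding Q_def by blast
    qed
    moreover have "P \<subseteq> Q"
    proof
      fix p assume "p \<in> P"
      moreover have "p = p + a * 0" by simp
      ultimately show "p \<in> Q" unfolding Q_def using SR(1) by blast
    qed
    moreover have "Q \<inter> M = {}" using H unfolding Q_def by blast
    ultimately have "Q = P" using mx by blast
    moreover have "a \<in> Q"
    proof -
      have "a = 0 + a * 1" by simp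
      then show ?thesis unfolding Q_def using PI(2) SR(2) by blast
    qed
    ultimately show False using a by blast
  qed
  have "prime_ideal R P" unfolding prime_ideal_def
  proof (intro conjI ballI impI)
    show "ideal R P" by fact
    show "P \<noteq> R" using P(3) assms(4) SR(2) by blast
  next
    fix a b assume ab: "a \<in> R" "b \<in> R" "a * b \<in> P"
    show "a \<in> P \<or> b \<in> P"
    proof (rule ccontr)
      assume "\<not> ?thesis"
      then have na: "a \<notin> P" and nb: "b \<notin> P" by auto
      obtain p r where pr: "p \<in> P" "r \<in> R" "p + a * r \<in> M" using ext[OF ab(1) na] by blast
      obtain p' r' where pr': "p' \<in> P" "r' \<in> R" "p' + b * r' \<in> M" using ext[OF ab(2) nb] by blast
      have eq: "(p + a * r) * (p' + b * r') = (p' + b * r') * p + (r * p') * a + (r * r') * (a * b)"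
        by (simp add: algebra_simps)
      have sR: "p' + b * r' \<in> R" using pr'(3) assms(5) by blast
      have aR: "r * p' \<in> R" using pr(2) pr'(1) PI(1) SR(4) by blast
      have rr: "r * r' \<in> R" using pr(2) pr'(2) SR(4) by blast
      have P1: "(p' + b * r') * p \<in> P" using PI(4) sR pr(1) by blast
      have P2: "(r * p') * a \<in> P" using PI(4) pr(2) pr'(1) ab(1) PI(5)
        by (metis mult.assoc)
      have P3: "(r * r') * (a * b) \<in> P" using PI(4) rr ab(3) by blast
      have "(p' + b * r') * p + (r * p') * a + (r * r') * (a * b) \<in> P"
        using P1 P2 P3 PI(3) by blast
      moreover have "(p + a * r) * (p' + b * r') \<in> M" using Mm pr(3) pr'(3) by blast
      ultimately show False using eq P(3) by auto
    qed
  qed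
  then show ?thesis using P by blast
qed



lemma krull_ge2:
  assumes "prime_ideal R P0" "prime_ideal R P1" "prime_ideal R P2" "P0 \<subset> P1" "P1 \<subset> P2"
  shows "enat 2 \<le> krull_dim R"
proof -
  define P where "P = (\<lambda>i::nat. if i = 0 then P0 else if i = 1 then P1 else P2)"
  have "(\<forall>i\<le>2. prime_ideal R (P i)) \<and> (\<forall>i<2. P i \<subset> P (Suc i))"
    using assms unfolding P_def by (auto simp: le_Suc_eq less_Suc_eq numeral_2_eq_2)
  then have "enat 2 \<in> {enat n | n. \<exists>P :: nat \<Rightarrow> _ set.
      (\<forall>i\<le>n. prime_ideal R (P i)) \<and> (\<forall>i<n. P i \<subset> P (Suc i))}" by blast
  then show ?thesis unfolding krull_dim_def by (rule Sup_upper)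
qed



locale lring =
  fixes R m :: "'q::comm_ring_1 set"
  assumes loc: "local_ring R m" and dim: "krull_dim R = 1"
begin

lemma sub: "subring R" using loc unfolding local_ring_def noetherian_ring_def by blast
lemmas SR = subring_facts[OF sub]
lemma mmax: "maximal_ideal R m" using loc unfolding local_ring_def by blast
lemma muniq: "maximal_ideal R J \<Longrightarrow> J = m" using loc unfolding local_ring_def by blast
lemma mI: "ideal R m" and mR: "m \<noteq> R" using mmax unfolding maximal_ideal_def by auto
lemmas MI = idealD[OF mI]
lemma mmaxD: "ideal R J \<Longrightarrow> m \<subseteq> J \<Longrightarrow> J = m \<or> J = R"
  using mmax unfolding maximal_ideal_def by blast

lemma one_notin_m: "1 \<notin> m" using ideal_one[OF mI] mR by blast

lemma unit:
  assumes a: "a \<in> R" "a \<notin> m" shows "\<exists>b\<in>R. a * b = 1"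
proof (rule ccontr)
  assume H: "\<not> ?thesis"
  define J0 where "J0 = {a * r | r. r \<in> R}"
  have J0: "ideal R J0" unfolding ideal_def submodule_def
  proof (intro conjI ballI)
    show "J0 \<subseteq> R" unfolding J0_def using a SR(4) by blast
    have "0 = a * 0" by simp
    then show "0 \<in> J0" unfolding J0_def using SR(1) by blast
  next
    fix y z assume "y \<in> J0" "z \<in> J0"
    then obtain r r' where "y = a * r" "z = a * r'" "r \<in> R" "r' \<in> R" unfolding J0_def by blast
    moreover have "y + z = a * (r + r')" using calculation by (simp add: algebra_simps)
    ultimately show "y + z \<in> J0" unfolding J0_def using SR(3) by blast
  next
    fix c y assume "c \<in> R" "y \<in> J0"
    then obtain r where "y = a * r" "r \<in> R" unfolding J0_def by blast
    moreover have "c * y = a * (c * r)" using calculation by (simp add: algebra_simps)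
    ultimately show "c * y \<in> J0" unfolding J0_def using SR(4) \<open>c \<in> R\<close> by blast
  qed
  have "J0 \<inter> {1} = {}" using H unfolding J0_def by blast
  from zorn_ideal[OF J0 this] obtain P where P: "ideal R P" "J0 \<subseteq> P" "P \<inter> {1} = {}"
    and mx: "\<forall>Q. ideal R Q \<and> P \<subseteq> Q \<and> Q \<inter> {1} = {} \<longrightarrow> Q = P" by blast
  have "maximal_ideal R P" unfolding maximal_ideal_def
  proof (intro conjI allI impI)
    show "ideal R P" by fact
    show "P \<noteq> R" using P(3) SR(2) by blast
  next
    fix J assume J: "ideal R J \<and> P \<subseteq> J"
    show "J = P \<or> J = R"
    proof (cases "1 \<in> J")
      case True then have "J = R" using ideal_one J by blast
      then show ?thesis by blast
    next
      case False then show ?thesis using mx J by blast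
    qed
  qed
  then have "P = m" by (rule muniq)
  moreover have "a \<in> J0"
  proof -
    have "a = a * 1" by simp
    then show ?thesis unfolding J0_def using SR(2) by blast
  qed
  ultimately show False using P(2) a(2) by blast
qed

end


context lring begin
lemma proper_in_m:
  assumes "ideal R J" "J \<noteq> R" shows "J \<subseteq> m"
proof
  fix a assume a: "a \<in> J"
  show "a \<in> m"
  proof (rule ccontr)
    assume "a \<notin> m"
    then obtain b where "b \<in> R" "a * b = 1" using unit idealD(1)[OF assms(1)] a by blast
    then have "a * b \<in> J" using idealD(5)[OF assms(1)] a by blast
    then have "1 \<in> J" using \<open>a * b = 1\<close> by simp
    then show False using ideal_one assms by blast
  qed
qed

lemma m_prime: "prime_ideal R m"
  unfolding prime_ideal_def
proof (intro conjI ballI impI)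
  show "ideal R m" "m \<noteq> R" by (fact mI, fact mR)
next
  fix a b assume ab: "a \<in> R" "b \<in> R" "a * b \<in> m"
  show "a \<in> m \<or> b \<in> m"
  proof (rule ccontr)
    assume "\<not> ?thesis"
    then obtain a' b' where "a' \<in> R" "b' \<in> R" "a * a' = 1" "b * b' = 1" using unit ab by blast
    moreover have "(a * b) * (a' * b') = (a * a') * (b * b')" by (simp add: algebra_simps)
    ultimately have "(a * b) * (a' * b') = 1" by simp
    moreover have "(a * b) * (a' * b') \<in> m" using MI(5) ab(3) SR(4) \<open>a' \<in> R\<close> \<open>b' \<in> R\<close> by blast
    ultimately have "1 \<in> m" by simp
    then show False using one_notin_m by blast
  qed
qed

lemma nzd_pow: assumes "nzd R s" shows "nzd R (s ^ k)"
proof (induction k)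
  case 0 then show ?case unfolding nzd_def using SR(2) by simp
next
  case (Suc k)
  have sR: "s \<in> R" using assms unfolding nzd_def by blast
  show ?case unfolding nzd_def
  proof (intro conjI ballI impI)
    show "s ^ Suc k \<in> R" using SR(7)[OF sR] .
  next
    fix b assume b: "b \<in> R" "s ^ Suc k * b = 0"
    then have "s * (s ^ k * b) = 0" by (simp add: mult.assoc)
    moreover have "s ^ k * b \<in> R" using SR(4,7) sR b(1) by blast
    ultimately have "s ^ k * b = 0" using assms unfolding nzd_def by blast
    then show "b = 0" using Suc b(1) unfolding nzd_def by blast
  qed
qed

end


context lring begin
lemma ideal_P_not_R: "ideal R P \<Longrightarrow> P \<noteq> R \<Longrightarrow> 1 \<notin> P" using ideal_one by blast

lemma dimD:
  assumes s: "nzd R s" and x: "x \<in> m"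
  shows "\<exists>k r. r \<in> R \<and> x ^ k = s * r"
proof (rule ccontr)
  assume H: "\<not> ?thesis"
  have sR: "s \<in> R" using s unfolding nzd_def by blast
  have xR: "x \<in> R" using x MI(1) by blast
  define J0 where "J0 = {s * r | r. r \<in> R}"
  have J0: "ideal R J0" unfolding ideal_def submodule_def
  proof (intro conjI ballI)
    show "J0 \<subseteq> R" unfolding J0_def using sR SR(4) by blast
    have "0 = s * 0" by simp
    then show "0 \<in> J0" unfolding J0_def using SR(1) by blast
  next
    fix y z assume "y \<in> J0" "z \<in> J0"
    then obtain r r' where "y = s * r" "z = s * r'" "r \<in> R" "r' \<in> R" unfolding J0_def by blast
    moreover have "y + z = s * (r + r')" using calculation by (simp add: algebra_simps)
    ultimately show "y + z \<in> J0" unfolding J0_def using SR(3) by blast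
  next
    fix c y assume "c \<in> R" "y \<in> J0"
    then obtain r where "y = s * r" "r \<in> R" unfolding J0_def by blast
    moreover have "c * y = s * (c * r)" using calculation by (simp add: algebra_simps)
    ultimately show "c * y \<in> J0" unfolding J0_def using SR(4) \<open>c \<in> R\<close> by blast
  qed
  define M1 where "M1 = range (\<lambda>k. x ^ k)"
  have d1: "J0 \<inter> M1 = {}"
  proof (rule ccontr)
    assume "J0 \<inter> M1 \<noteq> {}"
    then obtain y where "y \<in> J0" "y \<in> M1" by blast
    then obtain r k where "y = s * r" "r \<in> R" "y = x ^ k" unfolding J0_def M1_def by blast
    then show False using H by metis
  qed
  have o1: "1 \<in> M1" unfolding M1_def using rangeI[of "\<lambda>k. x ^ k" 0] by simp
  have s1: "M1 \<subseteq> R" unfolding M1_def using SR(7) xR by blast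
  have c1: "\<And>a b. a \<in> M1 \<Longrightarrow> b \<in> M1 \<Longrightarrow> a * b \<in> M1" unfolding M1_def
  proof -
    fix a b assume "a \<in> range (\<lambda>k. x ^ k)" "b \<in> range (\<lambda>k. x ^ k)"
    then obtain i j where "a = x ^ i" "b = x ^ j" by blast
    then have "a * b = x ^ (i + j)" by (simp add: power_add)
    then show "a * b \<in> range (\<lambda>k. x ^ k)" by blast
  qed
  obtain P where P: "prime_ideal R P" "J0 \<subseteq> P" "P \<inter> M1 = {}"
    using zorn_prime[OF sub J0 d1 o1 s1 c1] by blast
  have PI: "ideal R P" and PR: "P \<noteq> R" using P(1) unfolding prime_ideal_def by auto
  have Pp: "\<And>a b. a \<in> R \<Longrightarrow> b \<in> R \<Longrightarrow> a * b \<in> P \<Longrightarrow> a \<in> P \<or> b \<in> P"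
    using P(1) unfolding prime_ideal_def by blast
  have "x \<in> M1" unfolding M1_def using rangeI[of "\<lambda>k. x ^ k" 1] by simp
  then have xP: "x \<notin> P" using P(3) by blast
  have Pm: "P \<subset> m" using proper_in_m[OF PI PR] xP x by blast
  have one: "1 \<notin> P" using ideal_one PI PR by blast
  define M2 where "M2 = {t * s ^ k | t k. t \<in> R \<and> t \<notin> P}"
  have z0: "ideal R {0}" unfolding ideal_def submodule_def using SR(1) by auto
  have d2: "{0} \<inter> M2 = {}"
  proof -
    { fix t k assume t: "t \<in> R" "t \<notin> P" "t * s ^ k = 0"
      then have "s ^ k * t = 0" by (simp add: mult.commute)
      then have "t = 0" using nzd_pow[OF s, of k] t(1) unfolding nzd_def by blast
      then have False using t(2) idealD(2)[OF PI] by blast }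
    note X = this
    show ?thesis
    proof (rule ccontr)
      assume "{0} \<inter> M2 \<noteq> {}"
      then have "0 \<in> M2" by blast
      then obtain t k where "0 = t * s ^ k" "t \<in> R" "t \<notin> P" unfolding M2_def by blast
      then show False using X by metis
    qed
  qed
  have o2: "1 \<in> M2"
  proof -
    have "(1::'q) = 1 * s ^ 0" by simp
    then show ?thesis unfolding M2_def using one SR(2) by blast
  qed
  have s2: "M2 \<subseteq> R" unfolding M2_def using SR(4,7) sR by blast
  have c2: "\<And>a b. a \<in> M2 \<Longrightarrow> b \<in> M2 \<Longrightarrow> a * b \<in> M2"
  proof -
    fix a b assume "a \<in> M2" "b \<in> M2"
    then obtain t k t' k' where tt: "a = t * s ^ k" "b = t' * s ^ k'" "t \<in> R" "t \<notin> P" "t' \<in> R" "t' \<notin> P"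
      unfolding M2_def by blast
    have "a * b = (t * t') * s ^ (k + k')" using tt by (simp add: algebra_simps power_add)
    moreover have "t * t' \<in> R" "t * t' \<notin> P" using tt Pp SR(4) by blast+
    ultimately show "a * b \<in> M2" unfolding M2_def by blast
  qed
  obtain P' where P': "prime_ideal R P'" "P' \<inter> M2 = {}"
    using zorn_prime[OF sub z0 d2 o2 s2 c2] by blast
  have P'I: "ideal R P'" using P'(1) unfolding prime_ideal_def by auto
  have "P' \<subseteq> P"
  proof
    fix a assume a: "a \<in> P'"
    show "a \<in> P"
    proof (rule ccontr)
      assume "a \<notin> P"
      moreover have "a \<in> R" using a idealD(1)[OF P'I] by blast
      ultimately have "a * s ^ 0 \<in> M2" unfolding M2_def by blast
      then have "a \<in> M2" by simp
      then show False using a P'(2) by blast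
    qed
  qed
  moreover have "s \<in> P"
  proof -
    have "s = s * 1" by simp
    then have "s \<in> J0" unfolding J0_def using SR(2) by blast
    then show ?thesis using P(2) by blast
  qed
  moreover have "s \<notin> P'"
  proof -
    have "1 * s ^ 1 \<in> M2" unfolding M2_def using one SR(2) by blast
    then show ?thesis using P'(2) by auto
  qed
  ultimately have "P' \<subset> P" by blast
  from krull_ge2[OF P'(1) P(1) m_prime this Pm] show False using dim by (simp add: one_enat_def)
qed

end


lemma ideal_ext:
  assumes S: "subring R" and J: "ideal R J" and c: "c \<in> R"
  defines "J2 \<equiv> {j + a * c | j a. j \<in> J \<and> a \<in> R}"
  shows "ideal R J2" "J \<subseteq> J2" "c \<in> J2"
proof -
  note SR = subring_facts[OF S]
  note JI = idealD[OF J]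
  show "ideal R J2" unfolding ideal_def submodule_def
  proof (intro conjI ballI)
    show "J2 \<subseteq> R"
    proof
      fix y assume "y \<in> J2"
      then obtain j a where "y = j + a * c" "j \<in> J" "a \<in> R" unfolding J2_def by blast
      then show "y \<in> R" using JI(1) SR(3,4) c by blast
    qed
    have "0 = 0 + 0 * c" by simp
    then show "0 \<in> J2" unfolding J2_def using JI(2) SR(1) by blast
  next
    fix y z assume "y \<in> J2" "z \<in> J2"
    then obtain j a j' a' where "y = j + a * c" "z = j' + a' * c" "j \<in> J" "a \<in> R" "j' \<in> J" "a' \<in> R"
      unfolding J2_def by blast
    moreover have "y + z = (j + j') + (a + a') * c" using calculation by (simp add: algebra_simps)
    moreover have "j + j' \<in> J" "a + a' \<in> R" using calculation JI(3) SR(3) by blast+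
    ultimately show "y + z \<in> J2" unfolding J2_def by blast
  next
    fix d y assume d: "d \<in> R" "y \<in> J2"
    then obtain j a where "y = j + a * c" "j \<in> J" "a \<in> R" unfolding J2_def by blast
    moreover have "d * y = d * j + (d * a) * c" using calculation by (simp add: algebra_simps)
    moreover have "d * j \<in> J" "d * a \<in> R" using calculation d JI(4) SR(4) by blast+
    ultimately show "d * y \<in> J2" unfolding J2_def by blast
  qed
  show "J \<subseteq> J2"
  proof
    fix j assume "j \<in> J"
    moreover have "j = j + 0 * c" by simp
    ultimately show "j \<in> J2" unfolding J2_def using SR(1) by blast
  qed
  have "c = 0 + 1 * c" by simp
  then show "c \<in> J2" unfolding J2_def using JI(2) SR(2) by blast
qed

lemma ideal_diff: "subring R \<Longrightarrow> ideal R J \<Longrightarrow> a \<in> J \<Longrightarrow> b \<in> J \<Longrightarrow> a - b \<in> J"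
  using submod_facts(5) unfolding ideal_def by blast
lemma ideal_neg: "subring R \<Longrightarrow> ideal R J \<Longrightarrow> a \<in> J \<Longrightarrow> - a \<in> J"
  using submod_facts(4) unfolding ideal_def by blast

locale canon = lring R m for R m :: "'q::comm_ring_1 set" +
  fixes K :: "'q set" and x u s0 :: 'q
  assumes Kmod: "submodule R K" and RK: "R \<subseteq> K"
  and xm: "x \<in> m" and xnzd: "nzd R x" and xu: "x * u = 1"
  and B1: "injective_over_quot R ((\<lambda>r. x*r)`R) ((\<lambda>k. x*k)`K) K"
  and s0K: "s0 \<notin> K" and s0m: "\<And>a. a \<in> m \<Longrightarrow> a * s0 \<in> K"
begin

lemmas KM = submod_facts[OF sub Kmod]
lemma xR: "x \<in> R" using xm MI(1) by blast
lemma ux: "u * (x * z) = z"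
proof -
  have "u * (x * z) = (x * u) * z" by (simp add: algebra_simps)
  then show ?thesis using xu by simp
qed
lemma xu': "x * (u * z) = z"
proof -
  have "x * (u * z) = (x * u) * z" by (simp add: algebra_simps)
  then show ?thesis using xu by simp
qed

lemma N_iff: "z \<in> (\<lambda>k. x*k)`K \<longleftrightarrow> u * z \<in> K"
proof
  assume "z \<in> (\<lambda>k. x*k)`K"
  then obtain k where "k \<in> K" "z = x * k" by blast
  then show "u * z \<in> K" using ux by simp
next
  assume "u * z \<in> K"
  moreover have "z = x * (u * z)" using xu' by simp
  ultimately show "z \<in> (\<lambda>k. x*k)`K" by blast
qed

lemma B1':
  assumes J: "ideal R J" and xJ: "\<And>r. r \<in> R \<Longrightarrow> x * r \<in> J"
    and gK: "\<And>a. a \<in> J \<Longrightarrow> g a \<in> K"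
    and ad: "\<And>a b. a \<in> J \<Longrightarrow> b \<in> J \<Longrightarrow> u * (g (a + b) - (g a + g b)) \<in> K"
    and sc: "\<And>r a. r \<in> R \<Longrightarrow> a \<in> J \<Longrightarrow> u * (g (r * a) - r * g a) \<in> K"
    and zx: "\<And>r. r \<in> R \<Longrightarrow> u * g (x * r) \<in> K"
  shows "\<exists>y\<in>K. \<forall>a\<in>J. u * (g a - a * y) \<in> K"
proof -
  have c1: "(\<lambda>r. x*r)`R \<subseteq> J" using xJ by blast
  have c2: "g ` J \<subseteq> K" using gK by blast
  have c3: "\<forall>a\<in>J. \<forall>b\<in>J. g (a + b) - (g a + g b) \<in> (\<lambda>k. x*k)`K"
    using ad unfolding N_iff by blast
  have c4: "\<forall>r\<in>R. \<forall>a\<in>J. g (r * a) - r * g a \<in> (\<lambda>k. x*k)`K"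
    using sc unfolding N_iff by blast
  have c5: "\<forall>a\<in>(\<lambda>r. x*r)`R. g a \<in> (\<lambda>k. x*k)`K"
  proof
    fix a assume "a \<in> (\<lambda>r. x*r)`R"
    then obtain r where "r \<in> R" "a = x * r" by blast
    then show "g a \<in> (\<lambda>k. x*k)`K" unfolding N_iff using zx by blast
  qed
  have "\<exists>y\<in>K. \<forall>a\<in>J. g a - a * y \<in> (\<lambda>k. x*k)`K"
    using B1 J c1 c2 c3 c4 c5 unfolding injective_over_quot_def by blast
  then show ?thesis unfolding N_iff .
qed

end


context canon begin

lemma K_add3: "a \<in> K \<Longrightarrow> b \<in> K \<Longrightarrow> a + b \<in> K" using KM(2) .
lemma K_diff: "a \<in> K \<Longrightarrow> b \<in> K \<Longrightarrow> a - b \<in> K" using KM(5) .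

lemma L_ext:
  assumes J: "ideal R J"
  and gx: "\<And>a. a \<in> J \<Longrightarrow> x * g a \<in> K"
  and ad: "\<And>a b. a \<in> J \<Longrightarrow> b \<in> J \<Longrightarrow> g (a + b) - (g a + g b) \<in> K"
  and sc: "\<And>r a. r \<in> R \<Longrightarrow> a \<in> J \<Longrightarrow> g (r * a) - r * g a \<in> K"
  and gxr: "\<And>r. r \<in> R \<Longrightarrow> x * r \<in> J \<Longrightarrow> g (x * r) \<in> K"
  shows "\<exists>y. \<forall>a\<in>J. g a - a * y \<in> K"
proof -
  note JI = idealD[OF J]
  define J2 where "J2 = {j + a * x | j a. j \<in> J \<and> a \<in> R}"
  have J2: "ideal R J2" unfolding J2_def by (rule ideal_ext(1)[OF sub J xR])
  have JJ2: "J \<subseteq> J2" unfolding J2_def by (rule ideal_ext(2)[OF sub J xR])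
  have xJ2: "x \<in> J2" unfolding J2_def by (rule ideal_ext(3)[OF sub J xR])
  note J2I = idealD[OF J2]
  have g0: "g 0 \<in> K"
  proof -
    have "g (0 + 0) - (g 0 + g 0) \<in> K" using ad JI(2) by blast
    then have "- g 0 \<in> K" by simp
    then have "- (- g 0) \<in> K" using KM(4) by blast
    then show ?thesis by simp
  qed
  have wd: "g a - g a' \<in> K" if a: "a \<in> J" "a' \<in> J" "r \<in> R" "a = a' + r * x" for a a' r
  proof -
    have "x * r = a - a'" using a(4) by (simp add: algebra_simps)
    then have xr: "x * r \<in> J" using ideal_diff[OF sub J a(1) a(2)] by simp
    have 1: "g (a' + x * r) - (g a' + g (x * r)) \<in> K" using ad a(2) xr by blast
    have 2: "g (x * r) \<in> K" using gxr a(3) xr by blast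
    have "g a - g a' = (g (a' + x * r) - (g a' + g (x * r))) + g (x * r)"
      using a(4) by (simp add: algebra_simps)
    then show ?thesis using K_add3[OF 1 2] by simp
  qed
  define \<beta> where "\<beta> b = (SOME a. a \<in> J \<and> (\<exists>r\<in>R. b = a + r * x))" for b
  have \<beta>s: "\<beta> b \<in> J \<and> (\<exists>r\<in>R. b = \<beta> b + r * x)" if "b \<in> J2" for b
  proof -
    have "\<exists>a. a \<in> J \<and> (\<exists>r\<in>R. b = a + r * x)" using that unfolding J2_def by blast
    then show ?thesis unfolding \<beta>_def by (rule someI_ex)
  qed
  have \<beta>w: "g (\<beta> b) - g a \<in> K" if b: "b \<in> J2" "a \<in> J" "r \<in> R" "b = a + r * x" for b a r
  proof -
    obtain r' where r': "r' \<in> R" "b = \<beta> b + r' * x" using \<beta>s[OF b(1)] by blast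
    have "\<beta> b = a + (r - r') * x" using r'(2) b(4) by (simp add: algebra_simps)
    moreover have "r - r' \<in> R" using SR(6) b(3) r'(1) by blast
    ultimately show ?thesis using wd \<beta>s[OF b(1)] b(2) by blast
  qed
  define h where "h b = x * g (\<beta> b)" for b
  have uh: "u * h b = g (\<beta> b)" for b unfolding h_def by (rule ux)
  have "\<exists>y\<in>K. \<forall>a\<in>J2. u * (h a - a * y) \<in> K"
  proof (rule B1'[OF J2])
    show "x * r \<in> J2" if "r \<in> R" for r using J2I(5) xJ2 that by blast
    show "h a \<in> K" if "a \<in> J2" for a unfolding h_def using gx \<beta>s[OF that] by blast
  next
    fix b b' assume bb: "b \<in> J2" "b' \<in> J2"
    obtain r where r: "r \<in> R" "b = \<beta> b + r * x" "\<beta> b \<in> J" using \<beta>s[OF bb(1)] by blast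
    obtain r' where r': "r' \<in> R" "b' = \<beta> b' + r' * x" "\<beta> b' \<in> J" using \<beta>s[OF bb(2)] by blast
    have e1: "b + b' = (\<beta> b + \<beta> b') + (r + r') * x" using r r' by (simp add: algebra_simps)
    have s1: "\<beta> b + \<beta> b' \<in> J" using JI(3) r(3) r'(3) by blast
    have s2: "r + r' \<in> R" using SR(3) r(1) r'(1) by blast
    have k1: "g (\<beta> (b + b')) - g (\<beta> b + \<beta> b') \<in> K"
      using \<beta>w[OF J2I(3)[OF bb] s1 s2 e1] .
    have k2: "g (\<beta> b + \<beta> b') - (g (\<beta> b) + g (\<beta> b')) \<in> K" using ad r(3) r'(3) by blast
    have "u * (h (b + b') - (h b + h b')) = u * h (b + b') - (u * h b + u * h b')"
      by (simp add: algebra_simps)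
    also have "\<dots> = (g (\<beta> (b + b')) - g (\<beta> b + \<beta> b')) + (g (\<beta> b + \<beta> b') - (g (\<beta> b) + g (\<beta> b')))"
      unfolding uh by simp
    finally show "u * (h (b + b') - (h b + h b')) \<in> K" using K_add3[OF k1 k2] by simp
  next
    fix c b assume cb: "c \<in> R" "b \<in> J2"
    obtain r where r: "r \<in> R" "b = \<beta> b + r * x" "\<beta> b \<in> J" using \<beta>s[OF cb(2)] by blast
    have "c * b = c * (\<beta> b + r * x)" using r(2) by (rule arg_cong)
    then have e1: "c * b = c * \<beta> b + (c * r) * x" by (simp add: algebra_simps)
    have s1: "c * \<beta> b \<in> J" using JI(4) cb(1) r(3) by blast
    have s2: "c * r \<in> R" using SR(4) cb(1) r(1) by blast
    have k1: "g (\<beta> (c * b)) - g (c * \<beta> b) \<in> K"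
      using \<beta>w[OF J2I(4)[OF cb] s1 s2 e1] .
    have k2: "g (c * \<beta> b) - c * g (\<beta> b) \<in> K" using sc cb(1) r(3) by blast
    have "u * (h (c * b) - c * h b) = u * h (c * b) - c * (u * h b)"
      by (simp add: algebra_simps)
    also have "\<dots> = (g (\<beta> (c * b)) - g (c * \<beta> b)) + (g (c * \<beta> b) - c * g (\<beta> b))"
      unfolding uh by simp
    finally show "u * (h (c * b) - c * h b) \<in> K" using K_add3[OF k1 k2] by simp
  next
    fix r assume r: "r \<in> R"
    have xr: "x * r \<in> J2" using J2I(5) xJ2 r by blast
    have "x * r = 0 + r * x" by (simp add: mult.commute)
    then have "g (\<beta> (x * r)) - g 0 \<in> K" using \<beta>w[OF xr JI(2) r] by blast
    then have "g (\<beta> (x * r)) - g 0 + g 0 \<in> K" using K_add3 g0 by blast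
    then show "u * h (x * r) \<in> K" unfolding uh by simp
  qed
  then obtain y where y: "y \<in> K" "\<forall>a\<in>J2. u * (h a - a * y) \<in> K" by blast
  have "g a - a * (u * y) \<in> K" if a: "a \<in> J" for a
  proof -
    have aJ2: "a \<in> J2" using JJ2 a by blast
    have k1: "g (\<beta> a) - a * (u * y) \<in> K"
    proof -
      have "u * (h a - a * y) = u * h a - a * (u * y)" by (simp add: algebra_simps)
      moreover have "u * (h a - a * y) \<in> K" using y(2) aJ2 by blast
      ultimately show ?thesis unfolding uh by simp
    qed
    have "a = a + 0 * x" by simp
    then have k2: "g (\<beta> a) - g a \<in> K" using \<beta>w[OF aJ2 a SR(1)] by blast
    have "g a - a * (u * y) = (g (\<beta> a) - a * (u * y)) - (g (\<beta> a) - g a)" by simp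
    then show ?thesis using K_diff[OF k1 k2] by simp
  qed
  then show ?thesis by blast
qed

end


context canon begin

lemma INJ:
  "ideal R J \<Longrightarrow> x ^ n \<in> J \<Longrightarrow>
   (\<And>a b. a \<in> J \<Longrightarrow> b \<in> J \<Longrightarrow> f (a + b) - (f a + f b) \<in> K) \<Longrightarrow>
   (\<And>r a. r \<in> R \<Longrightarrow> a \<in> J \<Longrightarrow> f (r * a) - r * f a \<in> K) \<Longrightarrow>
   \<exists>y. \<forall>a\<in>J. f a - a * y \<in> K"
proof (induction n arbitrary: J f)
  case 0
  note JI = idealD[OF 0(1)]
  have "f a - a * f 1 \<in> K" if a: "a \<in> J" for a
  proof -
    have one: "1 \<in> J" using 0(2) by simp
    have "a \<in> R" using JI(1) a by blast
    then have "f (a * 1) - a * f 1 \<in> K" using 0(4)[of a 1] one by blast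
    then show ?thesis by simp
  qed
  then show ?case by blast
next
  case (Suc n)
  note JI = idealD[OF Suc(2)]
  define J' where "J' = {r \<in> R. x * r \<in> J}"
  have J': "ideal R J'" unfolding ideal_def submodule_def
  proof (intro conjI ballI)
    show "J' \<subseteq> R" unfolding J'_def by blast
    show "0 \<in> J'" unfolding J'_def using SR(1) JI(2) by simp
  next
    fix a b assume ab: "a \<in> J'" "b \<in> J'"
    have "x * (a + b) = x * a + x * b" by (simp add: algebra_simps)
    moreover have "x * a + x * b \<in> J" using ab JI(3) unfolding J'_def by blast
    moreover have "a + b \<in> R" using ab SR(3) unfolding J'_def by blast
    ultimately show "a + b \<in> J'" unfolding J'_def by simp
  next
    fix c a assume ca: "c \<in> R" "a \<in> J'"
    have "x * (c * a) = c * (x * a)" by (simp add: algebra_simps)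
    moreover have "c * (x * a) \<in> J" using ca JI(4) unfolding J'_def by blast
    moreover have "c * a \<in> R" using ca SR(4) unfolding J'_def by blast
    ultimately show "c * a \<in> J'" unfolding J'_def by (metis (mono_tags, lifting) mem_Collect_eq)
  qed
  have xn: "x ^ n \<in> J'" unfolding J'_def using SR(7)[OF xR] Suc(3) by simp
  have "\<exists>y. \<forall>a\<in>J'. f (x * a) - a * y \<in> K"
  proof (rule Suc.IH[OF J' xn])
    fix a b assume ab: "a \<in> J'" "b \<in> J'"
    then have "f (x * a + x * b) - (f (x * a) + f (x * b)) \<in> K" using Suc(4) unfolding J'_def by blast
    moreover have "x * (a + b) = x * a + x * b" by (simp add: algebra_simps)
    ultimately show "f (x * (a + b)) - (f (x * a) + f (x * b)) \<in> K" by simp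
  next
    fix r a assume ra: "r \<in> R" "a \<in> J'"
    then have k: "f (r * (x * a)) - r * f (x * a) \<in> K" using Suc(5) unfolding J'_def by blast
    have eq: "x * (r * a) = r * (x * a)" by (simp add: algebra_simps)
    show "f (x * (r * a)) - r * f (x * a) \<in> K" unfolding eq by (rule k)
  qed
  then obtain y1 where y1: "\<And>a. a \<in> J' \<Longrightarrow> f (x * a) - a * y1 \<in> K" by blast
  define g where "g a = f a - a * (u * y1)" for a
  have "\<exists>y. \<forall>a\<in>J. g a - a * y \<in> K"
  proof (rule L_ext[OF Suc(2)])
    fix a assume a: "a \<in> J"
    have aJ': "a \<in> J'" unfolding J'_def using JI(1) JI(4)[OF xR a] a by blast
    have k1: "f (x * a) - x * f a \<in> K" using Suc(5) xR a by blast
    have k2: "f (x * a) - a * y1 \<in> K" using y1 aJ' by blast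
    have "x * g a = x * f a - a * (x * (u * y1))" unfolding g_def by (simp add: algebra_simps)
    also have "\<dots> = (f (x * a) - a * y1) - (f (x * a) - x * f a)" unfolding xu' by simp
    finally show "x * g a \<in> K" using K_diff[OF k2 k1] by simp
  next
    fix a b assume "a \<in> J" "b \<in> J"
    moreover have "g (a + b) - (g a + g b) = f (a + b) - (f a + f b)" unfolding g_def
      by (simp add: algebra_simps)
    ultimately show "g (a + b) - (g a + g b) \<in> K" using Suc(4) by simp
  next
    fix r a assume "r \<in> R" "a \<in> J"
    moreover have "g (r * a) - r * g a = f (r * a) - r * f a" unfolding g_def
      by (simp add: algebra_simps)
    ultimately show "g (r * a) - r * g a \<in> K" using Suc(5) by simp
  next
    fix r assume r: "r \<in> R" "x * r \<in> J"
    then have "r \<in> J'" unfolding J'_def by blast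
    then have k: "f (x * r) - r * y1 \<in> K" using y1 by blast
    have "g (x * r) = f (x * r) - r * (x * (u * y1))" unfolding g_def by (simp add: algebra_simps)
    also have "\<dots> = f (x * r) - r * y1" unfolding xu' by simp
    finally show "g (x * r) \<in> K" using k by simp
  qed
  then obtain y2 where y2: "\<forall>a\<in>J. g a - a * y2 \<in> K" by blast
  have "f a - a * (u * y1 + y2) \<in> K" if "a \<in> J" for a
  proof -
    have "f a - a * (u * y1 + y2) = g a - a * y2" unfolding g_def by (simp add: algebra_simps)
    then show ?thesis using y2 that by simp
  qed
  then show ?case by blast
qed

end


context canon begin
lemma G:
  assumes J: "ideal R J" and xn: "x ^ n \<in> J" and r: "r \<in> R" "r \<notin> J"
  shows "\<exists>p. (\<forall>j\<in>J. p * j \<in> K) \<and> r * p \<notin> K"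
proof -
  note JI = idealD[OF J]
  define J2 where "J2 = {j + a * r | j a. j \<in> J \<and> a \<in> R}"
  have J2: "ideal R J2" unfolding J2_def by (rule ideal_ext(1)[OF sub J r(1)])
  have JJ2: "J \<subseteq> J2" unfolding J2_def by (rule ideal_ext(2)[OF sub J r(1)])
  have rJ2: "r \<in> J2" unfolding J2_def by (rule ideal_ext(3)[OF sub J r(1)])
  have key: "a * s0 \<in> K" if a: "a \<in> R" "a * r \<in> J" for a
  proof (rule s0m, rule ccontr)
    assume "a \<notin> m"
    then obtain c where c: "c \<in> R" "a * c = 1" using unit a(1) by blast
    have "c * (a * r) \<in> J" using JI(4) c(1) a(2) by blast
    moreover have "c * (a * r) = (a * c) * r" by (simp add: algebra_simps)
    then have "c * (a * r) = r" using c(2) by simp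
    ultimately show False using r(2) by simp
  qed
  define \<alpha> where "\<alpha> b = (SOME a. a \<in> R \<and> b - a * r \<in> J)" for b
  have \<alpha>s: "\<alpha> b \<in> R \<and> b - \<alpha> b * r \<in> J" if bJ: "b \<in> J2" for b
  proof -
    obtain j a where "b = j + a * r" "j \<in> J" "a \<in> R" using bJ unfolding J2_def by blast
    then have "\<exists>a. a \<in> R \<and> b - a * r \<in> J" by auto
    then show ?thesis unfolding \<alpha>_def by (rule someI_ex)
  qed
  have \<alpha>w: "(\<alpha> b - a) * s0 \<in> K" if b: "b \<in> J2" "a \<in> R" "b - a * r \<in> J" for b a
  proof -
    have eq: "(\<alpha> b - a) * r = (b - a * r) - (b - \<alpha> b * r)" by (simp add: algebra_simps)
    have "(b - a * r) - (b - \<alpha> b * r) \<in> J" using ideal_diff[OF sub J b(3)] \<alpha>s[OF b(1)] by blast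
    then have "(\<alpha> b - a) * r \<in> J" unfolding eq .
    moreover have "\<alpha> b - a \<in> R" using SR(6) \<alpha>s[OF b(1)] b(2) by blast
    ultimately show ?thesis using key by blast
  qed
  define f where "f b = \<alpha> b * s0" for b
  have "\<exists>y. \<forall>a\<in>J2. f a - a * y \<in> K"
  proof (rule INJ[OF J2])
    show "x ^ n \<in> J2" using JJ2 xn by blast
  next
    fix b b' assume bb: "b \<in> J2" "b' \<in> J2"
    have s: "\<alpha> b + \<alpha> b' \<in> R" using SR(3) \<alpha>s bb by blast
    have eq: "b + b' - (\<alpha> b + \<alpha> b') * r = (b - \<alpha> b * r) + (b' - \<alpha> b' * r)" by (simp add: algebra_simps)
    have "(b - \<alpha> b * r) + (b' - \<alpha> b' * r) \<in> J" using JI(3) \<alpha>s bb by blast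
    then have "b + b' - (\<alpha> b + \<alpha> b') * r \<in> J" unfolding eq .
    then have "(\<alpha> (b + b') - (\<alpha> b + \<alpha> b')) * s0 \<in> K" using \<alpha>w[OF idealD(3)[OF J2 bb] s] by blast
    moreover have "(\<alpha> (b + b') - (\<alpha> b + \<alpha> b')) * s0 = f (b + b') - (f b + f b')"
      unfolding f_def by (simp add: algebra_simps)
    ultimately show "f (b + b') - (f b + f b') \<in> K" by metis
  next
    fix c b assume cb: "c \<in> R" "b \<in> J2"
    have s: "c * \<alpha> b \<in> R" using SR(4) \<alpha>s cb by blast
    have eq: "c * b - (c * \<alpha> b) * r = c * (b - \<alpha> b * r)" by (simp add: algebra_simps)
    have "c * (b - \<alpha> b * r) \<in> J" using JI(4) \<alpha>s cb by blast
    then have "c * b - (c * \<alpha> b) * r \<in> J" unfolding eq .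
    then have "(\<alpha> (c * b) - c * \<alpha> b) * s0 \<in> K" using \<alpha>w[OF idealD(4)[OF J2 cb] s] by blast
    moreover have "(\<alpha> (c * b) - c * \<alpha> b) * s0 = f (c * b) - c * f b"
      unfolding f_def by (simp add: algebra_simps)
    ultimately show "f (c * b) - c * f b \<in> K" by metis
  qed
  then obtain y where y: "\<forall>a\<in>J2. f a - a * y \<in> K" by blast
  have "y * j \<in> K" if j: "j \<in> J" for j
  proof -
    have jJ2: "j \<in> J2" using JJ2 j by blast
    have "j - 0 * r \<in> J" using j by simp
    then have "(\<alpha> j - 0) * s0 \<in> K" using \<alpha>w[OF jJ2 SR(1)] by blast
    then have k1: "f j \<in> K" unfolding f_def by simp
    have k2: "f j - j * y \<in> K" using y jJ2 by blast
    have "y * j = f j - (f j - j * y)" by (simp add: algebra_simps)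
    then show ?thesis using K_diff[OF k1 k2] by metis
  qed
  moreover have "r * y \<notin> K"
  proof
    assume ry: "r * y \<in> K"
    have "r - 1 * r \<in> J" using JI(2) by simp
    then have k1: "(\<alpha> r - 1) * s0 \<in> K" using \<alpha>w[OF rJ2 SR(2)] by blast
    have k2: "f r - r * y \<in> K" using y rJ2 by blast
    have "s0 = ((f r - r * y) + r * y) - (\<alpha> r - 1) * s0" unfolding f_def by (simp add: algebra_simps)
    then have "s0 \<in> K" using K_diff[OF K_add3[OF k2 ry] k1] by metis
    then show False using s0K by blast
  qed
  ultimately show ?thesis by blast
qed

end


lemma principal_ideal:
  assumes S: "subring R" and c: "c \<in> R"
  shows "ideal R {c * r | r. r \<in> R}"
proof -
  note SR = subring_facts[OF S]
  show ?thesis unfolding ideal_def submodule_def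
  proof (intro conjI ballI)
    show "{c * r | r. r \<in> R} \<subseteq> R" using c SR(4) by blast
    have "0 = c * 0" by simp
    then show "0 \<in> {c * r | r. r \<in> R}" using SR(1) by blast
  next
    fix y z assume "y \<in> {c * r | r. r \<in> R}" "z \<in> {c * r | r. r \<in> R}"
    then obtain r r' where "y = c * r" "z = c * r'" "r \<in> R" "r' \<in> R" by blast
    moreover have "y + z = c * (r + r')" using calculation by (simp add: algebra_simps)
    ultimately show "y + z \<in> {c * r | r. r \<in> R}" using SR(3) by blast
  next
    fix d y assume "d \<in> R" "y \<in> {c * r | r. r \<in> R}"
    then obtain r where "y = c * r" "r \<in> R" by blast
    moreover have "d * y = c * (d * r)" using calculation by (simp add: algebra_simps)
    ultimately show "d * y \<in> {c * r | r. r \<in> R}" using SR(4) \<open>d \<in> R\<close> by blast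
  qed
qed

context canon begin

lemma unx: "u ^ k * (x ^ k * z) = z"
proof -
  have "u ^ k * (x ^ k * z) = (x * u) ^ k * z" by (simp add: power_mult_distrib algebra_simps)
  then show ?thesis using xu by simp
qed

lemma xk_cancel: assumes "x ^ k * a = x ^ k * b" shows "a = b"
proof -
  have "u ^ k * (x ^ k * a) = u ^ k * (x ^ k * b)" using assms by simp
  then show ?thesis unfolding unx .
qed

definition dual :: "'q set \<Rightarrow> 'q set" where "dual L = {p. \<forall>l\<in>L. p * l \<in> K}"

lemma dual_anti: "L \<subseteq> L' \<Longrightarrow> dual L' \<subseteq> dual L" unfolding dual_def by blast

lemma dual_sub: "submodule R (dual L)"
  unfolding submodule_def
proof (intro conjI ballI)
  show "0 \<in> dual L" unfolding dual_def using KM(1) by simp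
next
  fix p p' assume "p \<in> dual L" "p' \<in> dual L"
  then show "p + p' \<in> dual L" unfolding dual_def using KM(2) by (simp add: distrib_right)
next
  fix r p assume "r \<in> R" "p \<in> dual L"
  then show "r * p \<in> dual L" unfolding dual_def using KM(3) by (simp add: mult.assoc)
qed

lemma dd_sub: "L \<subseteq> dual (dual L)"
proof
  fix l assume l: "l \<in> L"
  show "l \<in> dual (dual L)" unfolding dual_def
  proof (intro CollectI ballI)
    fix p assume "p \<in> {p. \<forall>l\<in>L. p * l \<in> K}"
    then have "p * l \<in> K" using l by blast
    then show "l * p \<in> K" by (simp add: mult.commute)
  qed
qed

lemma dual_R: "dual R = K"
proof
  show "dual R \<subseteq> K"
  proof
    fix p assume "p \<in> dual R"
    then have "p * 1 \<in> K" unfolding dual_def using SR(2) by blast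
    then show "p \<in> K" by simp
  qed
  show "K \<subseteq> dual R"
  proof
    fix k assume k: "k \<in> K"
    show "k \<in> dual R" unfolding dual_def
    proof (intro CollectI ballI)
      fix r assume "r \<in> R"
      then have "r * k \<in> K" using KM(3) k by blast
      then show "k * r \<in> K" by (simp add: mult.commute)
    qed
  qed
qed

end



locale canonT = canon R m K x u s0 for R m K :: "'q::comm_ring_1 set" and x u s0 :: 'q +
  fixes T :: "'q::comm_ring_1 set" and n :: nat
  assumes Tsub: "subring T" and RT: "R \<subseteq> T" and KT: "K \<subseteq> T" and RneT: "R \<noteq> T"
  and xnT: "\<And>t. t \<in> T \<Longrightarrow> x ^ n * t \<in> R"
begin

lemmas TR = subring_facts[OF Tsub]
lemma xnR: "x ^ n \<in> R" using SR(7)[OF xR] .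

lemma one_K: "1 \<in> K" using RK SR(2) by blast

lemma F1: "dual K \<subseteq> R"
proof
  fix q assume q: "q \<in> dual K"
  show "q \<in> R"
  proof (rule ccontr)
    assume qR: "q \<notin> R"
    define J where "J = {x ^ n * r | r. r \<in> R}"
    have J: "ideal R J" unfolding J_def by (rule principal_ideal[OF sub xnR])
    have "x ^ n = x ^ n * 1" by simp
    then have xJ: "x ^ n \<in> J" unfolding J_def using SR(2) by blast
    have "q * 1 \<in> K" using q one_K unfolding dual_def by blast
    then have qK: "q \<in> K" by simp
    have r0: "x ^ n * q \<in> R" using xnT KT qK by blast
    have r0J: "x ^ n * q \<notin> J"
    proof
      assume "x ^ n * q \<in> J"
      then obtain r where "x ^ n * q = x ^ n * r" "r \<in> R" unfolding J_def by blast
      then show False using xk_cancel qR by blast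
    qed
    obtain p where p: "\<forall>j\<in>J. p * j \<in> K" "x ^ n * q * p \<notin> K" using G[OF J xJ r0 r0J] by blast
    have "p * x ^ n \<in> K" using p(1) xJ by blast
    then have "q * (p * x ^ n) \<in> K" using q unfolding dual_def by blast
    moreover have "q * (p * x ^ n) = x ^ n * q * p" by (simp add: algebra_simps)
    ultimately show False using p(2) by simp
  qed
qed

lemma dual_K: "dual K = R"
proof
  show "dual K \<subseteq> R" by (rule F1)
  show "R \<subseteq> dual K" unfolding dual_def using KM(3) by blast
qed

lemma I_def': "colon R T = {a \<in> R. \<forall>t\<in>T. a * t \<in> R}" unfolding colon_def by simp

lemma dual_T: "dual T = colon R T"
proof
  show "dual T \<subseteq> colon R T"
  proof
    fix p assume p: "p \<in> dual T"
    have pt: "p * t \<in> R" if t: "t \<in> T" for t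
    proof -
      have "p * t \<in> dual K" unfolding dual_def
      proof (intro CollectI ballI)
        fix k assume "k \<in> K"
        then have "t * k \<in> T" using TR(4) t KT by blast
        then have "p * (t * k) \<in> K" using p unfolding dual_def by blast
        then show "p * t * k \<in> K" by (simp add: mult.assoc)
      qed
      then show ?thesis using F1 by blast
    qed
    have "p * 1 \<in> R" using pt TR(2) by blast
    then show "p \<in> colon R T" unfolding colon_def using pt by simp
  qed
  show "colon R T \<subseteq> dual T" unfolding colon_def dual_def using RK by blast
qed

lemma xnI: "x ^ n \<in> colon R T" unfolding colon_def using xnR xnT by blast

lemma dd_L:
  assumes L: "submodule R L" "K \<subseteq> L" "L \<subseteq> T"
  shows "dual (dual L) = L"
proof
  show "L \<subseteq> dual (dual L)" by (rule dd_sub)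
  show "dual (dual L) \<subseteq> L"
  proof
    fix l assume l: "l \<in> dual (dual L)"
    show "l \<in> L"
    proof (rule ccontr)
      assume lL: "l \<notin> L"
      note LM = submod_facts[OF sub L(1)]
      have "x ^ n \<in> dual L" using xnI dual_T dual_anti[OF L(3)] by blast
      then have "l * x ^ n \<in> K" using l unfolding dual_def by blast
      then have "x ^ n * (l * x ^ n) \<in> R" using xnT KT by blast
      moreover have "x ^ n * (l * x ^ n) = x ^ (n + n) * l" by (simp add: power_add algebra_simps)
      ultimately have r0: "x ^ (n + n) * l \<in> R" by simp
      define J where "J = {x ^ (n + n) * q | q. q \<in> L}"
      have xq: "x ^ (n + n) * q \<in> R" if q: "q \<in> L" for q
      proof -
        have "x ^ n * q \<in> R" using xnT L(3) q by blast
        then have "x ^ n * (x ^ n * q) \<in> R" using SR(4) xnR by blast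
        then show ?thesis by (simp add: power_add algebra_simps)
      qed
      have J: "ideal R J" unfolding ideal_def submodule_def
      proof (intro conjI ballI)
        show "J \<subseteq> R" unfolding J_def using xq by blast
        have "0 = x ^ (n + n) * 0" by simp
        then show "0 \<in> J" unfolding J_def using LM(1) by blast
      next
        fix y z assume "y \<in> J" "z \<in> J"
        then obtain q q' where "y = x ^ (n + n) * q" "z = x ^ (n + n) * q'" "q \<in> L" "q' \<in> L"
          unfolding J_def by blast
        moreover have "y + z = x ^ (n + n) * (q + q')" using calculation by (simp add: algebra_simps)
        moreover have "q + q' \<in> L" using calculation LM(2) by blast
        ultimately show "y + z \<in> J" unfolding J_def by blast
      next
        fix c y assume c: "c \<in> R" "y \<in> J"
        then obtain q where "y = x ^ (n + n) * q" "q \<in> L" unfolding J_def by blast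
        moreover have "c * y = x ^ (n + n) * (c * q)" using calculation by (simp add: algebra_simps)
        moreover have "c * q \<in> L" using calculation LM(3) c(1) by blast
        ultimately show "c * y \<in> J" unfolding J_def by blast
      qed
      have "1 \<in> L" using one_K L(2) by blast
      moreover have "x ^ (n + n) = x ^ (n + n) * 1" by simp
      ultimately have xJ: "x ^ (n + n) \<in> J" unfolding J_def by blast
      have r0J: "x ^ (n + n) * l \<notin> J"
      proof
        assume "x ^ (n + n) * l \<in> J"
        then obtain q where "x ^ (n + n) * l = x ^ (n + n) * q" "q \<in> L" unfolding J_def by blast
        then show False using xk_cancel lL by blast
      qed
      obtain p where p: "\<forall>j\<in>J. p * j \<in> K" "x ^ (n + n) * l * p \<notin> K"
        using G[OF J xJ r0 r0J] by blast
      have "x ^ (n + n) * p \<in> dual L" unfolding dual_def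
      proof (intro CollectI ballI)
        fix q assume "q \<in> L"
        then have "p * (x ^ (n + n) * q) \<in> K" using p(1) unfolding J_def by blast
        then show "x ^ (n + n) * p * q \<in> K" by (simp add: algebra_simps)
      qed
      then have "l * (x ^ (n + n) * p) \<in> K" using l unfolding dual_def by blast
      moreover have "l * (x ^ (n + n) * p) = x ^ (n + n) * l * p" by (simp add: algebra_simps)
      ultimately show False using p(2) by simp
    qed
  qed
qed

lemma TM: "submodule R T"
  unfolding submodule_def
proof (intro conjI ballI)
  show "0 \<in> T" by (rule TR(1))
  show "a + b \<in> T" if "a \<in> T" "b \<in> T" for a b using TR(3) that .
  show "r * a \<in> T" if "r \<in> R" "a \<in> T" for r a using TR(4) that RT by blast
qed

lemma dual_I: "dual (colon R T) = T"
  using dd_L[OF TM KT subset_refl] dual_T by simp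

end


lemma chain_mono:
  assumes "\<forall>i<k. L i \<subset> L (Suc i)" "i \<le> j" "j \<le> k"
  shows "L i \<subseteq> L j"
  using assms(2,3)
proof (induction j)
  case 0 then show ?case by simp
next
  case (Suc j)
  show ?case
  proof (cases "i = Suc j")
    case True then show ?thesis by simp
  next
    case False
    then have "i \<le> j" "j < k" using Suc.prems by auto
    then have "L i \<subseteq> L j" "L j \<subset> L (Suc j)" using Suc.IH assms(1) by auto
    then show ?thesis by blast
  qed
qed

context canonT begin

abbreviation "I \<equiv> colon R T"

lemma I_ideal: "ideal R I"
  unfolding ideal_def using dual_sub[of T] dual_T unfolding colon_def by auto

lemma I_ne: "I \<noteq> R"
proof
  assume "I = R"
  then have "1 \<in> I" using SR(2) by simp
  then have "T \<subseteq> R" unfolding colon_def by auto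
  then show False using RT RneT by blast
qed

lemma I_m: "I \<subseteq> m" using proper_in_m[OF I_ideal I_ne] .

lemma dd_J:
  assumes J: "ideal R J" "I \<subseteq> J"
  shows "dual (dual J) = J"
proof
  show "J \<subseteq> dual (dual J)" by (rule dd_sub)
  show "dual (dual J) \<subseteq> J"
  proof
    fix q assume q: "q \<in> dual (dual J)"
    have JR: "J \<subseteq> R" using J(1) unfolding ideal_def by blast
    have "K \<subseteq> dual J" using dual_anti[OF JR] dual_R by simp
    then have "q \<in> dual K" using dual_anti q by blast
    then have qR: "q \<in> R" using F1 by blast
    show "q \<in> J"
    proof (rule ccontr)
      assume "q \<notin> J"
      then obtain p where p: "\<forall>j\<in>J. p * j \<in> K" "q * p \<notin> K"
        using G[OF J(1) _ qR] xnI J(2) by blast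
      then have "p \<in> dual J" unfolding dual_def by blast
      then show False using q p(2) unfolding dual_def by blast
    qed
  qed
qed

lemma dualL_props:
  assumes L: "submodule R L" "K \<subseteq> L" "L \<subseteq> T"
  shows "ideal R (dual L)" "I \<subseteq> dual L"
proof -
  have "dual L \<subseteq> R" using dual_anti[OF L(2)] dual_K by simp
  then show "ideal R (dual L)" unfolding ideal_def using dual_sub by blast
  show "I \<subseteq> dual L" using dual_anti[OF L(3)] dual_T by simp
qed

lemma dualJ_props:
  assumes J: "ideal R J" "I \<subseteq> J"
  shows "submodule R (dual J)" "K \<subseteq> dual J" "dual J \<subseteq> T"
proof -
  show "submodule R (dual J)" by (rule dual_sub)
  have JR: "J \<subseteq> R" using J(1) unfolding ideal_def by blast
  show "K \<subseteq> dual J" using dual_anti[OF JR] dual_R by simp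
  show "dual J \<subseteq> T" using dual_anti[OF J(2)] dual_I by simp
qed

lemma chain_fwd:
  assumes L: "L 0 = K" "L k = T" "\<forall>i\<le>k. submodule R (L i)" "\<forall>i<k. L i \<subset> L (Suc i)"
  shows "\<exists>L'. L' 0 = I \<and> L' k = R \<and> (\<forall>i\<le>k. submodule R (L' i)) \<and> (\<forall>i<k. L' i \<subset> L' (Suc i))"
proof -
  have inr: "submodule R (L i) \<and> K \<subseteq> L i \<and> L i \<subseteq> T" if "i \<le> k" for i
    using chain_mono[OF L(4), of 0 i] chain_mono[OF L(4), of i k] that L by auto
  define L' where "L' i = dual (L (k - i))" for i
  have "L' 0 = I" unfolding L'_def using L(2) dual_T by simp
  moreover have "L' k = R" unfolding L'_def using L(1) dual_K by simp
  moreover have "\<forall>i\<le>k. submodule R (L' i)" unfolding L'_def using dual_sub by blast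
  moreover have "L' i \<subset> L' (Suc i)" if i: "i < k" for i
  proof -
    define j where "j = k - Suc i"
    have kj: "k - i = Suc j" "k - Suc i = j" "Suc j \<le> k" using i unfolding j_def by auto
    have lt: "L j \<subset> L (Suc j)" using L(4) kj(3) by auto
    have a: "dual (L (Suc j)) \<subseteq> dual (L j)" using dual_anti lt by blast
    have "dual (L (Suc j)) \<noteq> dual (L j)"
    proof
      assume "dual (L (Suc j)) = dual (L j)"
      then have "dual (dual (L (Suc j))) = dual (dual (L j))" by simp
      moreover have "dual (dual (L (Suc j))) = L (Suc j)"
      proof -
        have "submodule R (L (Suc j))" "K \<subseteq> L (Suc j)" "L (Suc j) \<subseteq> T" using inr[OF kj(3)] by auto
        then show ?thesis by (rule dd_L)
      qed
      moreover have "dual (dual (L j)) = L j"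
      proof -
        have "submodule R (L j)" "K \<subseteq> L j" "L j \<subseteq> T" using inr[of j] kj(3) by auto
        then show ?thesis by (rule dd_L)
      qed
      ultimately have "L (Suc j) = L j" by simp
      then show False using lt by blast
    qed
    then show ?thesis unfolding L'_def kj(1) kj(2) using a by blast
  qed
  ultimately show ?thesis by blast
qed

lemma chain_bwd:
  assumes J: "J 0 = I" "J k = R" "\<forall>i\<le>k. submodule R (J i)" "\<forall>i<k. J i \<subset> J (Suc i)"
  shows "\<exists>L'. L' 0 = K \<and> L' k = T \<and> (\<forall>i\<le>k. submodule R (L' i)) \<and> (\<forall>i<k. L' i \<subset> L' (Suc i))"
proof -
  have inr: "ideal R (J i) \<and> I \<subseteq> J i" if "i \<le> k" for i
    using chain_mono[OF J(4), of 0 i] chain_mono[OF J(4), of i k] that J unfolding ideal_def by auto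
  define L' where "L' i = dual (J (k - i))" for i
  have "L' 0 = K" unfolding L'_def using J(2) dual_R by simp
  moreover have "L' k = T" unfolding L'_def using J(1) dual_I by simp
  moreover have "\<forall>i\<le>k. submodule R (L' i)" unfolding L'_def using dual_sub by blast
  moreover have "L' i \<subset> L' (Suc i)" if i: "i < k" for i
  proof -
    define j where "j = k - Suc i"
    have kj: "k - i = Suc j" "k - Suc i = j" "Suc j \<le> k" using i unfolding j_def by auto
    have lt: "J j \<subset> J (Suc j)" using J(4) kj(3) by auto
    have a: "dual (J (Suc j)) \<subseteq> dual (J j)" using dual_anti lt by blast
    have "dual (J (Suc j)) \<noteq> dual (J j)"
    proof
      assume "dual (J (Suc j)) = dual (J j)"
      then have "dual (dual (J (Suc j))) = dual (dual (J j))" by simp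
      moreover have "dual (dual (J (Suc j))) = J (Suc j)"
      proof -
        have "ideal R (J (Suc j))" "I \<subseteq> J (Suc j)" using inr[OF kj(3)] by auto
        then show ?thesis by (rule dd_J)
      qed
      moreover have "dual (dual (J j)) = J j"
      proof -
        have "ideal R (J j)" "I \<subseteq> J j" using inr[of j] kj(3) by auto
        then show ?thesis by (rule dd_J)
      qed
      ultimately have "J (Suc j) = J j" by simp
      then show False using lt by blast
    qed
    then show ?thesis unfolding L'_def kj(1) kj(2) using a by blast
  qed
  ultimately show ?thesis by blast
qed

lemma mlength_eq: "mlength R K T = mlength R I R"
proof -
  have "{enat k | k. \<exists>L :: nat \<Rightarrow> 'q set. L 0 = K \<and> L k = T \<and>
      (\<forall>i\<le>k. submodule R (L i)) \<and> (\<forall>i<k. L i \<subset> L (Suc i))} =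
    {enat k | k. \<exists>L :: nat \<Rightarrow> 'q set. L 0 = I \<and> L k = R \<and>
      (\<forall>i\<le>k. submodule R (L i)) \<and> (\<forall>i<k. L i \<subset> L (Suc i))}"
  proof (rule Collect_cong, rule iffI)
    fix z assume "\<exists>k. z = enat k \<and> (\<exists>L :: nat \<Rightarrow> 'q set. L 0 = K \<and> L k = T \<and>
      (\<forall>i\<le>k. submodule R (L i)) \<and> (\<forall>i<k. L i \<subset> L (Suc i)))"
    then obtain k L where "z = enat k" "L 0 = K" "L k = T" "\<forall>i\<le>k. submodule R (L i)"
      "\<forall>i<k. L i \<subset> L (Suc i)" by blast
    note h = this
    obtain L' where "L' 0 = I \<and> L' k = R \<and> (\<forall>i\<le>k. submodule R (L' i)) \<and> (\<forall>i<k. L' i \<subset> L' (Suc i))"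
      using chain_fwd[OF h(2-5)] by blast
    then show "\<exists>k. z = enat k \<and> (\<exists>L :: nat \<Rightarrow> 'q set. L 0 = I \<and> L k = R \<and>
      (\<forall>i\<le>k. submodule R (L i)) \<and> (\<forall>i<k. L i \<subset> L (Suc i)))"
      using h(1) by blast
  next
    fix z assume "\<exists>k. z = enat k \<and> (\<exists>L :: nat \<Rightarrow> 'q set. L 0 = I \<and> L k = R \<and>
      (\<forall>i\<le>k. submodule R (L i)) \<and> (\<forall>i<k. L i \<subset> L (Suc i)))"
    then obtain k L where "z = enat k" "L 0 = I" "L k = R" "\<forall>i\<le>k. submodule R (L i)"
      "\<forall>i<k. L i \<subset> L (Suc i)" by blast
    note h = this
    obtain L' where "L' 0 = K \<and> L' k = T \<and> (\<forall>i\<le>k. submodule R (L' i)) \<and> (\<forall>i<k. L' i \<subset> L' (Suc i))"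
      using chain_bwd[OF h(2-5)] by blast
    then show "\<exists>k. z = enat k \<and> (\<exists>L :: nat \<Rightarrow> 'q set. L 0 = K \<and> L k = T \<and>
      (\<forall>i\<le>k. submodule R (L i)) \<and> (\<forall>i<k. L i \<subset> L (Suc i)))"
      using h(1) by blast
  qed
  then show ?thesis unfolding mlength_def by simp
qed

end


context canonT begin

definition "Ssoc = dual m"

lemma S_props: "submodule R Ssoc" "K \<subseteq> Ssoc" "Ssoc \<subseteq> T" "dual Ssoc = m"
proof -
  have J: "ideal R m" "I \<subseteq> m" using mI I_m by auto
  show "submodule R Ssoc" "K \<subseteq> Ssoc" "Ssoc \<subseteq> T" unfolding Ssoc_def using dualJ_props[OF J] by auto
  show "dual Ssoc = m" unfolding Ssoc_def using dd_J[OF J] .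
qed

lemma K_ne_S: "K \<noteq> Ssoc"
proof
  assume "K = Ssoc"
  then have "dual K = m" using S_props(4) by simp
  then show False using dual_K mR by simp
qed

lemma no_between:
  assumes L: "submodule R L" "K \<subset> L" "L \<subset> Ssoc"
  shows False
proof -
  have LT: "L \<subseteq> T" using L(3) S_props(3) by blast
  have D: "ideal R (dual L)" using dualL_props[OF L(1) _ LT] L(2) by blast
  have "m \<subseteq> dual L" using dual_anti[of L Ssoc] L(3) S_props(4) by blast
  then have "dual L = m \<or> dual L = R" using mmaxD D by blast
  moreover have ddL: "dual (dual L) = L" using dd_L[OF L(1) _ LT] L(2) by blast
  ultimately have "dual (dual L) = Ssoc \<or> dual (dual L) = K" unfolding Ssoc_def using dual_R by metis
  then have "L = Ssoc \<or> L = K" using ddL by simp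
  then show False using L(2,3) by blast
qed

lemma mlength_S: "mlength R K Ssoc = 1"
proof -
  have "{enat k | k. \<exists>L :: nat \<Rightarrow> 'q set. L 0 = K \<and> L k = Ssoc \<and>
      (\<forall>i\<le>k. submodule R (L i)) \<and> (\<forall>i<k. L i \<subset> L (Suc i))} = {enat 1}"
  proof
    show "{enat 1} \<subseteq> {enat k | k. \<exists>L :: nat \<Rightarrow> 'q set. L 0 = K \<and> L k = Ssoc \<and>
      (\<forall>i\<le>k. submodule R (L i)) \<and> (\<forall>i<k. L i \<subset> L (Suc i))}"
    proof -
      define L where "L i = (if i = 0 then K else Ssoc)" for i :: nat
      have "L 0 = K" "L 1 = Ssoc" unfolding L_def by auto
      moreover have "\<forall>i\<le>1. submodule R (L i)" unfolding L_def using Kmod S_props(1) by auto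
      moreover have "\<forall>i<1. L i \<subset> L (Suc i)" unfolding L_def using S_props(2) K_ne_S by auto
      ultimately show ?thesis by blast
    qed
  next
    show "{enat k | k. \<exists>L :: nat \<Rightarrow> 'q set. L 0 = K \<and> L k = Ssoc \<and>
      (\<forall>i\<le>k. submodule R (L i)) \<and> (\<forall>i<k. L i \<subset> L (Suc i))} \<subseteq> {enat 1}"
    proof
      fix z assume "z \<in> {enat k | k. \<exists>L :: nat \<Rightarrow> 'q set. L 0 = K \<and> L k = Ssoc \<and>
        (\<forall>i\<le>k. submodule R (L i)) \<and> (\<forall>i<k. L i \<subset> L (Suc i))}"
      then obtain k L where h: "z = enat k" "L 0 = K" "L k = Ssoc" "\<forall>i\<le>k. submodule R (L i)"
        "\<forall>i<k. L i \<subset> L (Suc i)" by blast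
      have "k = 1"
      proof (rule ccontr)
        assume k1: "k \<noteq> 1"
        show False
        proof (cases "k = 0")
          case True then show False using h K_ne_S by simp
        next
          case False
          then have k2: "2 \<le> k" using k1 by auto
          have "L 0 \<subset> L 1" using h(5) k2 by auto
          moreover have "L 1 \<subset> L 2" using h(5) k2 by (auto simp: numeral_2_eq_2)
          moreover have "L 2 \<subseteq> L k" using chain_mono[OF h(5), of 2 k] k2 by auto
          moreover have "submodule R (L 1)" using h(4) k2 by auto
          ultimately have "submodule R (L 1)" "K \<subset> L 1" "L 1 \<subset> Ssoc" using h(2,3) by auto
          then show False by (rule no_between)
        qed
      qed
      then show "z \<in> {enat 1}" using h(1) by simp
    qed
  qed
  then show ?thesis unfolding mlength_def by (simp add: one_enat_def)
qed

lemma essential: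
  assumes L: "submodule R L" "K \<subset> L" "L \<subseteq> T"
  shows "K \<subset> L \<inter> Ssoc"
proof -
  have D: "ideal R (dual L)" using dualL_props[OF L(1) _ L(3)] L(2) by blast
  have ddL: "dual (dual L) = L" using dd_L[OF L(1) _ L(3)] L(2) by blast
  have "dual L \<noteq> R"
  proof
    assume "dual L = R"
    then have "L = K" using ddL dual_R by simp
    then show False using L(2) by blast
  qed
  then have "dual L \<subseteq> m" using proper_in_m D by blast
  then have "Ssoc \<subseteq> L" unfolding Ssoc_def using dual_anti ddL by blast
  then have "L \<inter> Ssoc = Ssoc" by blast
  then show ?thesis using S_props(2) K_ne_S by auto
qed

lemma injT: "injective_over_quot R I K T"
  unfolding injective_over_quot_def
proof (intro allI impI)
  fix J f
  assume H: "ideal R J \<and> I \<subseteq> J \<and> f ` J \<subseteq> T \<and>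
        (\<forall>a\<in>J. \<forall>b\<in>J. f (a + b) - (f a + f b) \<in> K) \<and>
        (\<forall>r\<in>R. \<forall>a\<in>J. f (r * a) - r * f a \<in> K) \<and> (\<forall>a\<in>I. f a \<in> K)"
  have J: "ideal R J" and IJ: "I \<subseteq> J" and fI: "\<forall>a\<in>I. f a \<in> K"
    and ad: "\<forall>a\<in>J. \<forall>b\<in>J. f (a + b) - (f a + f b) \<in> K"
    and sc: "\<forall>r\<in>R. \<forall>a\<in>J. f (r * a) - r * f a \<in> K" using H by auto
  have xJ: "x ^ n \<in> J" using xnI IJ by blast
  obtain y where y: "\<forall>a\<in>J. f a - a * y \<in> K" using INJ[OF J xJ] ad sc by blast
  have "y \<in> dual I" unfolding dual_def
  proof (intro CollectI ballI)
    fix a assume a: "a \<in> I"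
    have k1: "f a \<in> K" using fI a by blast
    have k2: "f a - a * y \<in> K" using y a IJ by blast
    have "y * a = f a - (f a - a * y)" by (simp add: algebra_simps)
    then show "y * a \<in> K" using K_diff[OF k1 k2] by (simp add: mult.commute)
  qed
  then have "y \<in> T" using dual_I by simp
  then show "\<exists>y\<in>T. \<forall>a\<in>J. f a - a * y \<in> K" using y by blast
qed

lemma main: "inj_hull_residue R I K T \<and> mlength R K T = mlength R I R"
proof
  show "mlength R K T = mlength R I R" by (rule mlength_eq)
  show "inj_hull_residue R I K T" unfolding inj_hull_residue_def
  proof (intro conjI)
    show "submodule R K" by (rule Kmod)
    show "submodule R T" by (rule TM)
    show "K \<subseteq> T" by (rule KT)
    show "\<forall>a\<in>I. \<forall>t\<in>T. a * t \<in> K" unfolding colon_def using RK by blast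
    show "injective_over_quot R I K T" by (rule injT)
    show "\<exists>S. submodule R S \<and> K \<subseteq> S \<and> S \<subseteq> T \<and> mlength R K S = 1 \<and>
        (\<forall>L. submodule R L \<and> K \<subset> L \<and> L \<subseteq> T \<longrightarrow> K \<subset> L \<inter> S)"
    proof (intro exI conjI allI impI)
      show "submodule R Ssoc" "K \<subseteq> Ssoc" "Ssoc \<subseteq> T" using S_props by auto
      show "mlength R K Ssoc = 1" by (rule mlength_S)
      fix L assume "submodule R L \<and> K \<subset> L \<and> L \<subseteq> T"
      then show "K \<subset> L \<inter> Ssoc" using essential by blast
    qed
  qed
qed

end


lemma submod_ext:
  fixes R N :: "'a::comm_ring_1 set" and c :: 'a
  assumes S: "subring R" and N: "submodule R N"
  defines "L \<equiv> {y + r * c | y r. y \<in> N \<and> r \<in> R}"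
  shows "submodule R L" "N \<subseteq> L" "c \<in> L"
proof -
  note SR = subring_facts[OF S]
  note NM = submod_facts[OF S N]
  show "submodule R L" unfolding submodule_def
  proof (intro conjI ballI)
    have "0 = 0 + 0 * c" by simp
    then show "0 \<in> L" unfolding L_def using NM(1) SR(1) by blast
  next
    fix y z assume "y \<in> L" "z \<in> L"
    then obtain j a j' a' where "y = j + a * c" "z = j' + a' * c" "j \<in> N" "a \<in> R" "j' \<in> N" "a' \<in> R"
      unfolding L_def by blast
    moreover have "y + z = (j + j') + (a + a') * c" using calculation by (simp add: algebra_simps)
    moreover have "j + j' \<in> N" "a + a' \<in> R" using calculation NM(2) SR(3) by blast+
    ultimately show "y + z \<in> L" unfolding L_def by blast
  next
    fix d y assume d: "d \<in> R" "y \<in> L"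
    then obtain j a where "y = j + a * c" "j \<in> N" "a \<in> R" unfolding L_def by blast
    moreover have "d * y = d * j + (d * a) * c" using calculation by (simp add: algebra_simps)
    moreover have "d * j \<in> N" "d * a \<in> R" using calculation d NM(3) SR(4) by blast+
    ultimately show "d * y \<in> L" unfolding L_def by blast
  qed
  show "N \<subseteq> L"
  proof
    fix j assume "j \<in> N"
    moreover have "j = j + 0 * c" by simp
    ultimately show "j \<in> L" unfolding L_def using SR(1) by blast
  qed
  have "c = 0 + 1 * c" by simp
  then show "c \<in> L" unfolding L_def using NM(1) SR(2) by blast
qed

lemma sum_in_subring:
  assumes S: "subring R" and F: "finite F" shows "(\<forall>f\<in>F. g f \<in> R) \<longrightarrow> sum g F \<in> R"
  using F
proof (induction F rule: finite_induct)
  case empty then show ?case using subring_facts(1)[OF S] by simp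
next
  case (insert a F)
  then show ?case using subring_facts(3)[OF S] by simp
qed

context lring begin

lemma socle:
  assumes N: "submodule R N" and S: "submodule R S" "N \<subseteq> S" and ml: "mlength R N S = 1"
  shows "\<exists>s\<in>S. s \<notin> N \<and> (\<forall>a\<in>m. a * s \<in> N)"
proof -
  define CH where "CH = {enat k | k. \<exists>L :: nat \<Rightarrow> 'q set. L 0 = N \<and> L k = S \<and>
      (\<forall>i\<le>k. submodule R (L i)) \<and> (\<forall>i<k. L i \<subset> L (Suc i))}"
  have SupCH: "Sup CH = 1" using ml unfolding mlength_def CH_def .
  have no2: False if L: "submodule R L" "N \<subset> L" "L \<subset> S" for L
  proof -
    define LL where "LL i = (if i = 0 then N else if i = 1 then L else S)" for i :: nat
    have "LL 0 = N" "LL 2 = S" unfolding LL_def by auto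
    moreover have "\<forall>i\<le>2. submodule R (LL i)" unfolding LL_def using N S L(1)
      by (auto simp: le_Suc_eq numeral_2_eq_2)
    moreover have "\<forall>i<2. LL i \<subset> LL (Suc i)" unfolding LL_def using L
      by (auto simp: less_Suc_eq numeral_2_eq_2)
    ultimately have "enat 2 \<in> CH" unfolding CH_def by blast
    then have "enat 2 \<le> Sup CH" by (rule Sup_upper)
    then show False using SupCH by (simp add: one_enat_def)
  qed
  have NS: "N \<noteq> S"
  proof
    assume NS: "N = S"
    have "CH \<subseteq> {0}"
    proof
      fix z assume "z \<in> CH"
      then obtain k L where h: "z = enat k" "L 0 = N" "L k = S" "\<forall>i<k. L i \<subset> L (Suc i)"
        unfolding CH_def by blast
      have "k = 0"
      proof (rule ccontr)
        assume "k \<noteq> 0"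
        then have "L 0 \<subset> L 1" "L 1 \<subseteq> L k" using h(4) chain_mono[OF h(4), of 1 k] by auto
        then show False using h(2,3) NS by blast
      qed
      then show "z \<in> {0}" using h(1) by (simp add: zero_enat_def)
    qed
    then have "Sup CH \<le> 0" by (intro Sup_least) auto
    then show False using SupCH by simp
  qed
  then obtain s where s: "s \<in> S" "s \<notin> N" using S(2) by blast
  have "a * s \<in> N" if a: "a \<in> m" for a
  proof (rule ccontr)
    assume as: "a * s \<notin> N"
    have aR: "a \<in> R" using a MI(1) by blast
    define L where "L = {y + r * (a * s) | y r. y \<in> N \<and> r \<in> R}"
    have L: "submodule R L" "N \<subseteq> L" "a * s \<in> L" unfolding L_def using submod_ext[OF sub N] by auto
    have LS: "L \<subseteq> S"
    proof
      fix z assume "z \<in> L"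
      then obtain y r where "z = y + r * (a * s)" "y \<in> N" "r \<in> R" unfolding L_def by blast
      moreover have "a * s \<in> S" using submod_facts(3)[OF sub S(1) aR s(1)] .
      ultimately show "z \<in> S" using submod_facts(2,3)[OF sub S(1)] S(2) by blast
    qed
    have "L = S"
    proof (rule ccontr)
      assume "L \<noteq> S"
      then show False using no2[of L] L LS as by blast
    qed
    then have "s \<in> L" using s by simp
    then obtain y r where yr: "s = y + r * (a * s)" "y \<in> N" "r \<in> R" unfolding L_def by blast
    have "1 - r * a \<notin> m"
    proof
      assume "1 - r * a \<in> m"
      moreover have "r * a \<in> m" using MI(4) yr(3) a by blast
      ultimately have "(1 - r * a) + r * a \<in> m" using MI(3) by blast
      then show False using one_notin_m by simp
    qed
    moreover have "1 - r * a \<in> R" using SR(2,4,6) yr(3) aR by blast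
    ultimately obtain b where b: "b \<in> R" "(1 - r * a) * b = 1" using unit by blast
    have "(1 - r * a) * s = y" using yr(1) by (simp add: algebra_simps)
    then have "s = b * y"
    proof -
      assume e: "(1 - r * a) * s = y"
      have "s = ((1 - r * a) * b) * s" using b(2) by simp
      also have "\<dots> = b * ((1 - r * a) * s)" by (simp add: algebra_simps)
      finally show ?thesis using e by simp
    qed
    moreover have "b * y \<in> N" using submod_facts(3)[OF sub N b(1) yr(2)] .
    ultimately show False using s(2) by simp
  qed
  then show ?thesis using s by blast
qed

end


context lring begin
lemma denom:
  assumes tot: "total_ring_of_fractions R" and x: "x \<in> m" and fg: "fin_gen R T"
  shows "\<exists>n. \<forall>t\<in>T. x ^ n * t \<in> R"
proof -
  obtain F where F: "finite F" "T = rspan R F" using fg unfolding fin_gen_def by blast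
  have xR: "x \<in> R" using x MI(1) by blast
  have "\<exists>n. \<forall>f\<in>F. x ^ n * f \<in> R" using F(1)
  proof (induction F rule: finite_induct)
    case empty then show ?case by simp
  next
    case (insert f F)
    then obtain n1 where n1: "\<forall>g\<in>F. x ^ n1 * g \<in> R" by blast
    obtain a s where as: "a \<in> R" "nzd R s" "f * s = a" using tot unfolding total_ring_of_fractions_def by blast
    obtain k r where kr: "r \<in> R" "x ^ k = s * r" using dimD[OF as(2) x] by blast
    have fk: "x ^ k * f \<in> R"
    proof -
      have "x ^ k * f = (f * s) * r" using kr(2) by (simp add: algebra_simps)
      then show ?thesis using as(1,3) kr(1) SR(4) by simp
    qed
    have "x ^ (n1 + k) * g \<in> R" if g: "g \<in> insert f F" for g
    proof (cases "g = f")
      case True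
      have "x ^ (n1 + k) * g = x ^ n1 * (x ^ k * f)" using True by (simp add: power_add algebra_simps)
      then show ?thesis using SR(4) SR(7)[OF xR] fk by simp
    next
      case False
      then have "g \<in> F" using g by blast
      have "x ^ (n1 + k) * g = x ^ k * (x ^ n1 * g)" by (simp add: power_add algebra_simps)
      then show ?thesis using SR(4) SR(7)[OF xR] n1 \<open>g \<in> F\<close> by simp
    qed
    then show ?case by blast
  qed
  then obtain n where n: "\<forall>f\<in>F. x ^ n * f \<in> R" by blast
  have "x ^ n * t \<in> R" if t: "t \<in> T" for t
  proof -
    obtain c where c: "t = (\<Sum>f\<in>F. c f * f)" "\<forall>f\<in>F. c f \<in> R"
      using t F(2) unfolding rspan_def by blast
    have "x ^ n * t = (\<Sum>f\<in>F. c f * (x ^ n * f))" unfolding c(1) sum_distrib_left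
      by (simp add: algebra_simps)
    moreover have "(\<Sum>f\<in>F. c f * (x ^ n * f)) \<in> R"
    proof -
      have "\<forall>f\<in>F. c f * (x ^ n * f) \<in> R" using c(2) n SR(4) by blast
      then show ?thesis using sum_in_subring[OF sub F(1), of "\<lambda>f. c f * (x ^ n * f)"] by simp
    qed
    ultimately show ?thesis by simp
  qed
  then show ?thesis by blast
qed

end




theorem proposition3p3:
  fixes R m K T :: "'q::comm_ring_1 set"
  assumes "total_ring_of_fractions R"
    and "cohen_macaulay_local R m" and "krull_dim R = 1"
    and "R \<subseteq> K" and "K \<subseteq> integral_closure R" and "canonical_module_dim1 R m K"
    and "subring T" and "R \<subseteq> T" and "T \<subseteq> integral_closure R" and "fin_gen R T"
    and "K \<subseteq> T" and "R \<noteq> T"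
  shows "inj_hull_residue R (colon R T) K T \<and> mlength R K T = mlength R (colon R T) R"
proof -
  have loc: "local_ring R m" using assms(2) unfolding cohen_macaulay_local_def by blast
  interpret lring R m using loc assms(3) by unfold_locales
  have Kmod: "submodule R K" using assms(6) unfolding canonical_module_dim1_def by simp
  have "\<exists>x\<in>m. nzd R x \<and> (\<forall>k\<in>K. x * k = 0 \<longrightarrow> k = 0) \<and>
        inj_hull_residue R ((\<lambda>r. x * r) ` R) ((\<lambda>k. x * k) ` K) K"
    using assms(6) unfolding canonical_module_dim1_def by simp
  then obtain x where x: "x \<in> m" "nzd R x"
    and ih: "inj_hull_residue R ((\<lambda>r. x * r) ` R) ((\<lambda>k. x * k) ` K) K"
    by blast
  obtain u where u: "x * u = 1" using assms(1) x(2) unfolding total_ring_of_fractions_def by blast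
  have B1: "injective_over_quot R ((\<lambda>r. x * r) ` R) ((\<lambda>k. x * k) ` K) K"
    using ih unfolding inj_hull_residue_def by simp
  have Nmod: "submodule R ((\<lambda>k. x * k) ` K)"
    using ih unfolding inj_hull_residue_def by simp
  have "\<exists>S. submodule R S \<and> (\<lambda>k. x * k) ` K \<subseteq> S \<and> S \<subseteq> K \<and> mlength R ((\<lambda>k. x * k) ` K) S = 1 \<and>
        (\<forall>L. submodule R L \<and> (\<lambda>k. x * k) ` K \<subset> L \<and> L \<subseteq> K \<longrightarrow> (\<lambda>k. x * k) ` K \<subset> L \<inter> S)"
    using ih unfolding inj_hull_residue_def by simp
  then obtain S where S: "submodule R S" "(\<lambda>k. x * k) ` K \<subseteq> S" "S \<subseteq> K" "mlength R ((\<lambda>k. x * k) ` K) S = 1"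
    by blast
  obtain s where s: "s \<in> S" "s \<notin> (\<lambda>k. x * k) ` K" "\<forall>a\<in>m. a * s \<in> (\<lambda>k. x * k) ` K"
    using socle[OF Nmod S(1,2,4)] by blast
  have us: "u * (x * z) = z" for z
  proof -
    have "u * (x * z) = (x * u) * z" by (simp add: algebra_simps)
    then show ?thesis using u by simp
  qed
  have s0K: "u * s \<notin> K"
  proof
    assume "u * s \<in> K"
    moreover have "s = x * (u * s)"
    proof -
      have "x * (u * s) = (x * u) * s" by (simp add: algebra_simps)
      then show ?thesis using u by simp
    qed
    ultimately show False using s(2) by blast
  qed
  have s0m: "a * (u * s) \<in> K" if a: "a \<in> m" for a
  proof -
    obtain k where k: "k \<in> K" "a * s = x * k" using s(3) a by blast
    have "a * (u * s) = u * (a * s)" by (simp add: algebra_simps)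
    also have "\<dots> = k" using k(2) us by simp
    finally show ?thesis using k(1) by simp
  qed
  obtain n where n: "\<forall>t\<in>T. x ^ n * t \<in> R" using denom[OF assms(1) x(1) assms(10)] by blast
  have s0m': "\<forall>a. a \<in> m \<longrightarrow> a * (u * s) \<in> K" using s0m by blast
  have n': "\<forall>t. t \<in> T \<longrightarrow> x ^ n * t \<in> R" using n by blast
  have "canonT R m K x u (u * s) T n"
    unfolding canonT_def canonT_axioms_def canon_def canon_axioms_def lring_def
    using loc assms(3) Kmod assms(4) x u B1 s0K s0m' assms(7,8,11,12) n'
    by (intro conjI) assumption+
  then interpret canonT R m K x u "u * s" T n .
  show ?thesis by (rule main)
qed


end
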